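(* Under the setup in the context, assume in addition that $H_j$ is nonsingular and that the block GMRES residual $F_{j-1}^{(G)}$ has rank $L$ (so $\tilde C_j$ is nonsingular). Let $Q_j^{(11)}=\mathcal U_1\mathcal C\mathcal V_1^*$ and $Q_j^{(21)}=\mathcal U_2\mathcal S\mathcal V_1^*$ be a CS decomposition of the first block column of $\Omega_j$, with $\mathcal U_1,\mathcal U_2,\mathcal V_1\in\mathbb C^{L\times L}$ unitary and $\mathcal C=\mathrm{diag}(c_1,\dots,c_L)$, $\mathcal S=\mathrm{diag}(s_1,\dots,s_L)$ real, nonnegative, with $c_i^2+s_i^2=1$. Then $$X_j^{(G)}=X_j^{(F)}\bigl(\tilde C_j^{-1}\mathcal V_1\mathcal C^2\mathcal V_1^*\tilde C_j\bigr)+X_{j-1}^{(G)}\bigl(\tilde C_j^{-1}\mathcal V_1\mathcal S^2\mathcal V_1^*\tilde C_j\bigr),$$ where the two bracketed matrices sum to $I_L$ and $\tilde C_j^{-1}\mathcal V_1\mathcal C^2\mathcal V_1^*\tilde C_j=\tilde C_j^{-1}(Q_j^{(11)})^*Q_j^{(11)}\tilde C_j$.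
   Context: Let $n,L\ge1$, $A\in\mathbb C^{n\times n}$, $B,X_0\in\mathbb C^{n\times L}$, $F_0=B-AX_0$, and let $F_0=V_1S_0$ be a reduced QR factorization ($V_1\in\mathbb C^{n\times L}$ with orthonormal columns, $S_0\in\mathbb C^{L\times L}$ upper triangular). Fix $j\ge2$. The block Arnoldi process (possibly with dependent basis vectors replaced by new orthonormal vectors) yields $W_k=[V_1,\dots,V_k]\in\mathbb C^{n\times kL}$ ($k\le j+1$) with orthonormal columns, $V_i\in\mathbb C^{n\times L}$, and the block Arnoldi relation $AW_j=W_{j+1}\bar H_j$, where $\bar H_j=(H_{ik})\in\mathbb C^{(j+1)L\times jL}$ has $L\times L$ blocks $H_{ik}$, is block upper Hessenberg ($H_{ik}=0$ for $i>k+1$), and each $H_{k+1,k}$ is upper triangular. For $k\le j$, $\bar H_k$ denotes the leading $(k+1)L\times kL$ submatrix of $\bar H_j$ and $H_k$ the leading $kL\times kL$ submatrix. $E^{[m]}\in\mathbb R^{mL\times L}$ denotes the first $L$ columns of $I_{mL}$. For $k\ge1$ with $\bar H_k$ of full column rank, the block GMRES iterate is $X_k^{(G)}=X_0+W_kY_k^{(G)}$, where $Y_k^{(G)}\in\mathbb C^{kL\times L}$ is the unique minimizer of $\|\bar H_kY-E^{[k+1]}S_0\|_F$ (Frobenius norm), and $F_k^{(G)}=B-AX_k^{(G)}$. If $H_k$ is nonsingular, the block FOM iterate is $X_k^{(F)}=X_0+W_kH_k^{-1}E^{[k]}S_0$. Block QR factorization: assume $\bar H_j$ has full column rank. There are unitary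 matrices $\Omega_i=\begin{bmatrix}Q_i^{(11)}&Q_i^{(12)}\\Q_i^{(21)}&Q_i^{(22)}\end{bmatrix}\in\mathbb C^{2L\times 2L}$ ($i=1,\dots,j$, all four blocks $L\times L$); for $m\ge i+1$ put $Q_i^{(m)}=\mathrm{diag}(I_{(i-1)L},\Omega_i,I_{(m-i-1)L})\in\mathbb C^{mL\times mL}$ and $\bar Q_k=Q_k^{(k+1)}Q_{k-1}^{(k+1)}\cdots Q_1^{(k+1)}$. The $\Omega_i$ are chosen recursively so that $\bar Q_k\bar H_k=\begin{bmatrix}R_k\\ 0_{L\times kL}\end{bmatrix}$ with $R_k\in\mathbb C^{kL\times kL}$ upper triangular and nonsingular ($k=1,\dots,j$). In particular $Q_{j-1}^{(j+1)}\cdots Q_1^{(j+1)}\bar H_j=\begin{bmatrix}R_{j-1}&Z_j\\0&\hat H_{jj}\\0&H_{j+1,j}\end{bmatrix}$ for some $Z_j\in\mathbb C^{(j-1)L\times L}$, $\hat H_{jj}\in\mathbb C^{L\times L}$; and $\Omega_j\begin{bmatrix}\hat H_{jj}\\H_{j+1,j}\end{bmatrix}=\begin{bmatrix}N_j\\0\end{bmatrix}$ with $N_j$ upper triangular and nonsingular. Write $\bar Q_{j-1}E^{[j]}S_0=\begin{bmatrix}G_{j-1}\\\tilde C_j\end{bmatrix}$ with $G_{j-1}\in\mathbb C^{(j-1)L\times L}$, $\tilde C_j\in\mathbb C^{L\times L}$. *)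

theory Defs
  imports Complex_Main "Jordan_Normal_Form.Schur_Decomposition" "Jordan_Normal_Form.DL_Rank"
begin

(* All indices of blocks below are 1-based as in the paper; entries are 0-based. *)

definition blk :: "'a mat \<Rightarrow> nat \<Rightarrow> nat \<Rightarrow> nat \<Rightarrow> 'a mat" where
  "blk X i k L = mat L L (\<lambda>(a,b). X $$ ((i-1)*L + a, (k-1)*L + b))"

definition lead :: "nat \<Rightarrow> nat \<Rightarrow> 'a mat \<Rightarrow> 'a mat" where
  "lead r c X = mat r c (\<lambda>(a,b). X $$ (a,b))"

definition row_range :: "nat \<Rightarrow> nat \<Rightarrow> 'a mat \<Rightarrow> 'a mat" where
  "row_range r0 r X = mat r (dim_col X) (\<lambda>(a,b). X $$ (r0 + a, b))"

definition stack_zero :: "'a::zero mat \<Rightarrow> nat \<Rightarrow> 'a mat" where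
  "stack_zero R z = mat (dim_row R + z) (dim_col R) (\<lambda>(a,b). if a < dim_row R then R $$ (a,b) else 0)"

definition Eblk :: "nat \<Rightarrow> nat \<Rightarrow> 'a::{zero,one} mat" where
  "Eblk m L = mat (m*L) L (\<lambda>(a,b). if a = b then 1 else 0)"

text \<open>Q_i^{(m)} = diag(I_{(i-1)L}, Omega_i, I_{(m-i-1)L}).\<close>
definition Qemb :: "'a::{zero,one} mat \<Rightarrow> nat \<Rightarrow> nat \<Rightarrow> nat \<Rightarrow> 'a mat" where
  "Qemb Om i m L = mat (m*L) (m*L) (\<lambda>(a,b).
     let inb = (\<lambda>x. (i-1)*L \<le> x \<and> x < (i+1)*L) in
     if inb a \<and> inb b then Om $$ (a - (i-1)*L, b - (i-1)*L)
     else if \<not> inb a \<and> \<not> inb b \<and> a = b then 1 else 0)"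

fun qprod :: "(nat \<Rightarrow> 'a::comm_ring_1 mat) \<Rightarrow> nat \<Rightarrow> nat \<Rightarrow> nat \<Rightarrow> 'a mat" where
  "qprod Om 0 m L = 1\<^sub>m (m*L)"
| "qprod Om (Suc i) m L = Qemb (Om (Suc i)) (Suc i) m L * qprod Om i m L"

definition Qbar :: "(nat \<Rightarrow> 'a::comm_ring_1 mat) \<Rightarrow> nat \<Rightarrow> nat \<Rightarrow> 'a mat" where
  "Qbar Om k L = qprod Om k (k+1) L"

definition frob :: "complex mat \<Rightarrow> real" where
  "frob X = sqrt (\<Sum>a<dim_row X. \<Sum>b<dim_col X. (cmod (X $$ (a,b)))\<^sup>2)"

definition unitary :: "nat \<Rightarrow> complex mat \<Rightarrow> bool" where
  "unitary m U \<longleftrightarrow> U \<in> carrier_mat m m \<and> mat_adjoint U * U = 1\<^sub>m m"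

definition orthonormal_cols :: "complex mat \<Rightarrow> bool" where
  "orthonormal_cols V \<longleftrightarrow> mat_adjoint V * V = 1\<^sub>m (dim_col V)"

text \<open>Inverse of a square matrix (meaningful when it is nonsingular).\<close>
definition minv :: "complex mat \<Rightarrow> complex mat" where
  "minv X = (SOME Y. Y \<in> carrier_mat (dim_row X) (dim_row X) \<and>
              X * Y = 1\<^sub>m (dim_row X) \<and> Y * X = 1\<^sub>m (dim_row X))"

definition gmres_Y :: "complex mat \<Rightarrow> complex mat \<Rightarrow> nat \<Rightarrow> nat \<Rightarrow> complex mat" where
  "gmres_Y Hb S0 k L = (THE Y. Y \<in> carrier_mat (k*L) L \<and>
     (\<forall>Y' \<in> carrier_mat (k*L) L.
        frob (lead ((k+1)*L) (k*L) Hb * Y - Eblk (k+1) L * S0)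
        \<le> frob (lead ((k+1)*L) (k*L) Hb * Y' - Eblk (k+1) L * S0)))"

definition gmres_X :: "complex mat \<Rightarrow> complex mat \<Rightarrow> complex mat \<Rightarrow> complex mat \<Rightarrow> nat \<Rightarrow> nat \<Rightarrow> complex mat" where
  "gmres_X X0 W Hb S0 k L = X0 + lead (dim_row W) (k*L) W * gmres_Y Hb S0 k L"

definition fom_X :: "complex mat \<Rightarrow> complex mat \<Rightarrow> complex mat \<Rightarrow> complex mat \<Rightarrow> nat \<Rightarrow> nat \<Rightarrow> complex mat" where
  "fom_X X0 W Hb S0 k L = X0 + lead (dim_row W) (k*L) W * (minv (lead (k*L) (k*L) Hb) * (Eblk k L * S0))"

definition diag_real :: "nat \<Rightarrow> (nat \<Rightarrow> real) \<Rightarrow> complex mat" where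
  "diag_real L c = mat L L (\<lambda>(a,b). if a = b then complex_of_real (c a) else 0)"

end

theory Submission
  imports Defs
begin


lemma sum_split_add: "(\<Sum>k<(a::nat)+b. f k) = (\<Sum>k<a. f k) + (\<Sum>k<b. f (a+k))"
  by (induct b) (auto simp: add.assoc)

lemma mult_entry:
  assumes "i < dim_row A" "j < dim_col B" "dim_col A = dim_row B"
  shows "(A*B) $$ (i,j) = (\<Sum>k<dim_row B. A $$ (i,k) * B $$ (k,j))"
  using assms by (auto simp: scalar_prod_def atLeast0LessThan intro!: sum.cong)

definition vstack :: "'a mat \<Rightarrow> 'a mat \<Rightarrow> 'a mat" where
  "vstack A B = mat (dim_row A + dim_row B) (dim_col A)
     (\<lambda>(i,k). if i < dim_row A then A $$ (i,k) else B $$ (i - dim_row A, k))"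

lemma mult_entry':
  assumes "A \<in> carrier_mat r c" "B \<in> carrier_mat c d" "i < r" "j < d"
  shows "(A*B) $$ (i,j) = (\<Sum>k<c. A $$ (i,k) * B $$ (k,j))"
  using assms by (auto simp: scalar_prod_def atLeast0LessThan intro!: sum.cong)

lemma assoc_dim: "dim_col A = dim_row B \<Longrightarrow> dim_col B = dim_row C \<Longrightarrow> A*B*C = A*(B*(C::'a::comm_ring mat))"
  by (rule assoc_mult_mat[of A "dim_row A" "dim_col A" B "dim_col B" C "dim_col C"]) auto

lemma mult_add_dim: "dim_col A = dim_row B \<Longrightarrow> dim_row C = dim_row B \<Longrightarrow> dim_col C = dim_col B \<Longrightarrow> A*(B+C) = A*B + A*(C::'a::comm_ring mat)"
  by (rule mult_add_distrib_mat[of A "dim_row A" "dim_row B" B "dim_col B" C]) auto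
lemma add_mult_dim: "dim_row A = dim_row B \<Longrightarrow> dim_col A = dim_col B \<Longrightarrow> dim_col B = dim_row C \<Longrightarrow> (A+B)*C = A*C + B*(C::'a::comm_ring mat)"
  by (rule add_mult_distrib_mat[of A "dim_row B" "dim_col B" B C "dim_col C"]) auto
lemma mult_minus_dim: "dim_col A = dim_row B \<Longrightarrow> dim_row C = dim_row B \<Longrightarrow> dim_col C = dim_col B \<Longrightarrow> A*(B-C) = A*B - A*(C::'a::comm_ring mat)"
  by (rule mult_minus_distrib_mat[of A "dim_row A" "dim_row B" B "dim_col B" C]) auto
lemma minus_mult_dim: "dim_row A = dim_row B \<Longrightarrow> dim_col A = dim_col B \<Longrightarrow> dim_col B = dim_row C \<Longrightarrow> (A-B)*C = A*C - B*(C::'a::comm_ring mat)"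
  by (rule minus_mult_distrib_mat[of A "dim_row B" "dim_col B" B C "dim_col C"]) auto

lemma vstack_carrier[simp]: "A \<in> carrier_mat ra c \<Longrightarrow> B \<in> carrier_mat rb c \<Longrightarrow> vstack A B \<in> carrier_mat (ra+rb) c"
  by (auto simp: vstack_def)

lemma vstack_dims[simp]: "dim_row (vstack A B) = dim_row A + dim_row B" "dim_col (vstack A B) = dim_col A"
  by (auto simp: vstack_def)

lemma vstack_mult:
  assumes "A \<in> carrier_mat ra c" "B \<in> carrier_mat rb c" "C \<in> carrier_mat c d"
  shows "vstack A B * C = vstack (A*C) (B*C)"
proof (rule eq_matI)
  fix i k assume ik: "i < dim_row (vstack (A*C) (B*C))" "k < dim_col (vstack (A*C) (B*C))"
  have "(vstack A B * C) $$ (i,k) = (\<Sum>l<c. vstack A B $$ (i,l) * C $$ (l,k))"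
    by (rule mult_entry'[OF vstack_carrier[OF assms(1,2)] assms(3)]) (use ik assms in auto)
  also have "\<dots> = vstack (A*C) (B*C) $$ (i,k)"
    using assms ik by (auto simp del: index_mult_mat(1) simp: mult_entry' vstack_def)
  finally show "(vstack A B * C) $$ (i,k) = vstack (A*C) (B*C) $$ (i,k)" .
qed (use assms in auto)

lemma vstack_add:
  assumes "A \<in> carrier_mat ra c" "B \<in> carrier_mat rb c" "C \<in> carrier_mat ra c" "D \<in> carrier_mat rb c"
  shows "vstack A B + vstack C D = vstack (A+C) (B+D)"
  by (rule eq_matI) (use assms in \<open>auto simp: vstack_def\<close>)

lemma vstack_minus:
  assumes "A \<in> carrier_mat ra c" "B \<in> carrier_mat rb c" "C \<in> carrier_mat ra c" "D \<in> carrier_mat rb c"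
  shows "vstack A B - vstack C D = vstack (A-C) (B-D)"
  by (rule eq_matI) (use assms in \<open>auto simp: vstack_def\<close>)

lemma vstack_assoc:
  assumes "A \<in> carrier_mat ra c" "B \<in> carrier_mat rb c" "C \<in> carrier_mat rc c"
  shows "vstack (vstack A B) C = vstack A (vstack B C)"
  by (rule eq_matI) (use assms in \<open>auto simp: vstack_def\<close>)

lemma vstack_zero: "0\<^sub>m (a+b) c = vstack (0\<^sub>m a c) (0\<^sub>m b c)"
  by (rule eq_matI) (auto simp: vstack_def)

lemma row_range_vstack1:
  assumes "A \<in> carrier_mat ra c" "B \<in> carrier_mat rb c"
  shows "row_range 0 ra (vstack A B) = A"
  by (rule eq_matI) (use assms in \<open>auto simp: vstack_def row_range_def\<close>)

lemma row_range_vstack2: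
  assumes "A \<in> carrier_mat ra c" "B \<in> carrier_mat rb c" "x + r \<le> rb"
  shows "row_range (ra + x) r (vstack A B) = row_range x r B"
  by (rule eq_matI) (use assms in \<open>auto simp: vstack_def row_range_def\<close>)

lemma row_range_full: "B \<in> carrier_mat rb c \<Longrightarrow> row_range 0 rb B = B"
  by (rule eq_matI) (auto simp: row_range_def)

lemma vstack_split:
  assumes "X \<in> carrier_mat (r1+r2) c"
  shows "X = vstack (row_range 0 r1 X) (row_range r1 r2 X)"
  by (rule eq_matI) (use assms in \<open>auto simp: vstack_def row_range_def\<close>)

lemma vstack_inj:
  assumes "A \<in> carrier_mat ra c" "B \<in> carrier_mat rb c" "C \<in> carrier_mat ra c" "D \<in> carrier_mat rb c"
    "vstack A B = vstack C D"
  shows "A = C \<and> B = D"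
  using row_range_vstack1[OF assms(1,2)] row_range_vstack1[OF assms(3,4)]
    row_range_vstack2[OF assms(1,2), of 0 rb] row_range_vstack2[OF assms(3,4), of 0 rb]
    row_range_full[OF assms(2)] row_range_full[OF assms(4)] assms(5) by auto

lemma stack_zero_vstack: "stack_zero R z = vstack R (0\<^sub>m z (dim_col R))"
  by (rule eq_matI) (auto simp: vstack_def stack_zero_def)

lemma fb_vstack:
  assumes "M11 \<in> carrier_mat r1 c1" "M12 \<in> carrier_mat r1 c2" "M21 \<in> carrier_mat r2 c1" "M22 \<in> carrier_mat r2 c2"
    "X \<in> carrier_mat c1 d" "Y \<in> carrier_mat c2 d"
  shows "four_block_mat M11 M12 M21 M22 * vstack X Y = vstack (M11 * X + M12 * Y) (M21 * X + M22 * Y)"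
proof (rule eq_matI)
  fix i k assume ik: "i < dim_row (vstack (M11 * X + M12 * Y) (M21 * X + M22 * Y))"
     "k < dim_col (vstack (M11 * X + M12 * Y) (M21 * X + M22 * Y))"
  have "(four_block_mat M11 M12 M21 M22 * vstack X Y) $$ (i,k) =
    (\<Sum>l<c1+c2. four_block_mat M11 M12 M21 M22 $$ (i,l) * vstack X Y $$ (l,k))"
    by (rule trans[OF mult_entry]) (use assms ik in auto)
  also have "\<dots> = (\<Sum>l<c1. four_block_mat M11 M12 M21 M22 $$ (i,l) * vstack X Y $$ (l,k))
     + (\<Sum>l<c2. four_block_mat M11 M12 M21 M22 $$ (i,c1+l) * vstack X Y $$ (c1+l,k))"
    by (rule sum_split_add)
  also have "\<dots> = vstack (M11 * X + M12 * Y) (M21 * X + M22 * Y) $$ (i,k)"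
    using assms ik by (auto simp del: index_mult_mat(1) simp: vstack_def four_block_mat_def mult_entry' intro!: sum.cong arg_cong2[where f="(+)"])
  finally show "(four_block_mat M11 M12 M21 M22 * vstack X Y) $$ (i,k) = vstack (M11 * X + M12 * Y) (M21 * X + M22 * Y) $$ (i,k)" .
qed (use assms in auto)

lemma adj_dims[simp]: "dim_row (mat_adjoint A) = dim_col A" "dim_col (mat_adjoint A) = dim_row A"
  by (auto simp: mat_adjoint_def)

lemma adj_entry[simp]: "i < dim_col A \<Longrightarrow> k < dim_row A \<Longrightarrow> mat_adjoint A $$ (i,k) = cnj (A $$ (k,i))"
  by (auto simp: mat_adjoint_def mat_of_rows_def)

lemma adj_carrier[simp]: "A \<in> carrier_mat r c \<Longrightarrow> mat_adjoint A \<in> carrier_mat c r"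
  by auto

lemma adj_adj[simp]: "mat_adjoint (mat_adjoint (A::complex mat)) = A"
  by (rule eq_matI) auto

lemma adj_mult:
  assumes "A \<in> carrier_mat r c" "B \<in> carrier_mat c d"
  shows "mat_adjoint (A * (B::complex mat)) = mat_adjoint B * mat_adjoint A"
proof (rule eq_matI)
  fix i k assume ik: "i < dim_row (mat_adjoint B * mat_adjoint A)" "k < dim_col (mat_adjoint B * mat_adjoint A)"
  have "(mat_adjoint B * mat_adjoint A) $$ (i,k) = (\<Sum>l<c. mat_adjoint B $$ (i,l) * mat_adjoint A $$ (l,k))"
    by (rule mult_entry') (use ik assms in auto)
  also have "\<dots> = mat_adjoint (A * B) $$ (i,k)"
    using assms ik by (auto simp del: index_mult_mat(1) simp: mult_entry' mult.commute)
  finally show "mat_adjoint (A * B) $$ (i,k) = (mat_adjoint B * mat_adjoint A) $$ (i,k)" ..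
qed (use assms in auto)

lemma adj_fb:
  assumes "A \<in> carrier_mat r1 c1" "B \<in> carrier_mat r1 c2" "C \<in> carrier_mat r2 c1" "D \<in> carrier_mat r2 c2"
  shows "mat_adjoint (four_block_mat A B C (D::complex mat)) =
     four_block_mat (mat_adjoint A) (mat_adjoint C) (mat_adjoint B) (mat_adjoint D)"
  by (rule eq_matI) (use assms in \<open>auto simp: four_block_mat_def\<close>)

lemma adj_zero[simp]: "mat_adjoint (0\<^sub>m r c :: complex mat) = 0\<^sub>m c r"
  by (rule eq_matI) auto

lemma adj_one[simp]: "mat_adjoint (1\<^sub>m r :: complex mat) = 1\<^sub>m r"
  by (rule eq_matI) auto

lemma adj_diag_real[simp]: "mat_adjoint (diag_real L c) = diag_real L c"
  by (rule eq_matI) (auto simp: diag_real_def)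

lemma adj_add: "A \<in> carrier_mat r c \<Longrightarrow> B \<in> carrier_mat r c \<Longrightarrow> mat_adjoint (A + B :: complex mat) = mat_adjoint A + mat_adjoint B"
  by (rule eq_matI) auto

lemma adj_uminus: "mat_adjoint (- A :: complex mat) = - mat_adjoint A"
  by (rule eq_matI) auto

lemma unitary_right:
  assumes "unitary m U" shows "U * mat_adjoint U = 1\<^sub>m m"
  using assms mat_mult_left_right_inverse[of "mat_adjoint U" m U] unfolding unitary_def by auto

lemma unitary_mult:
  assumes "unitary m U" "unitary m V" shows "unitary m (U * V)"
proof -
  have c: "U \<in> carrier_mat m m" "V \<in> carrier_mat m m" using assms unfolding unitary_def by auto
  have c2: "mat_adjoint U \<in> carrier_mat m m" "mat_adjoint V \<in> carrier_mat m m" using c by auto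
  have "mat_adjoint (U*V) * (U*V) = mat_adjoint V * (mat_adjoint U * U) * V"
    using c c2 by (simp add: adj_mult[OF c] assoc_dim)
  also have "\<dots> = 1\<^sub>m m" using assms c unfolding unitary_def by auto
  finally show ?thesis using c unfolding unitary_def by auto
qed

lemma unitary_diag:
  assumes "unitary a A" "unitary b D"
  shows "unitary (a+b) (four_block_mat A (0\<^sub>m a b) (0\<^sub>m b a) D)"
proof -
  have c: "A \<in> carrier_mat a a" "D \<in> carrier_mat b b" using assms unfolding unitary_def by auto
  have "mat_adjoint (four_block_mat A (0\<^sub>m a b) (0\<^sub>m b a) D) * four_block_mat A (0\<^sub>m a b) (0\<^sub>m b a) D
      = four_block_mat (mat_adjoint A) (0\<^sub>m a b) (0\<^sub>m b a) (mat_adjoint D) * four_block_mat A (0\<^sub>m a b) (0\<^sub>m b a) D"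
    using c by (simp add: adj_fb[of _ a a _ b _ b])
  also have "\<dots> = four_block_mat (mat_adjoint A * A) (0\<^sub>m a b) (0\<^sub>m b a) (mat_adjoint D * D)"
    by (subst mult_four_block_mat) (use c in auto)
  also have "\<dots> = 1\<^sub>m (a+b)" using assms unfolding unitary_def by auto
  finally show ?thesis using c unfolding unitary_def by auto
qed

lemma frob_adj: "frob Y = sqrt (\<Sum>b<dim_col Y. Re ((mat_adjoint Y * Y) $$ (b,b)))"
proof -
  have "(\<Sum>a<dim_row Y. \<Sum>b<dim_col Y. (cmod (Y $$ (a,b)))\<^sup>2) = (\<Sum>b<dim_col Y. \<Sum>a<dim_row Y. (cmod (Y $$ (a,b)))\<^sup>2)"
    by (rule sum.swap)
  also have "\<dots> = (\<Sum>b<dim_col Y. Re ((mat_adjoint Y * Y) $$ (b,b)))"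
  proof (rule sum.cong[OF refl])
    fix b assume b: "b \<in> {..<dim_col Y}"
    have "(mat_adjoint Y * Y) $$ (b,b) = (\<Sum>a<dim_row Y. mat_adjoint Y $$ (b,a) * Y $$ (a,b))"
      by (rule mult_entry'[of _ _ "dim_row Y" _ "dim_col Y"]) (use b in auto)
    also have "\<dots> = (\<Sum>a<dim_row Y. of_real ((cmod (Y $$ (a,b)))\<^sup>2))"
      by (rule sum.cong[OF refl]) (metis complex_norm_square mult.commute adj_entry lessThan_iff b)
    finally show "(\<Sum>a<dim_row Y. (cmod (Y $$ (a,b)))\<^sup>2) = Re ((mat_adjoint Y * Y) $$ (b,b))"
      by (simp add: Re_sum)
  qed
  finally show ?thesis unfolding frob_def by simp
qed

lemma frob_unitary:
  assumes "mat_adjoint Q * Q = 1\<^sub>m r" "Q \<in> carrier_mat r r" "X \<in> carrier_mat r c"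
  shows "frob (Q * X) = frob X"
proof -
  have c2: "mat_adjoint Q \<in> carrier_mat r r" "mat_adjoint X \<in> carrier_mat c r" using assms by auto
  have e: "mat_adjoint Q * (Q * X) = X"
    using assms assoc_dim[of "mat_adjoint Q" Q X] by simp
  have "mat_adjoint (Q*X) * (Q*X) = mat_adjoint X * X"
    using assms c2 e by (simp add: adj_mult[OF assms(2,3)] assoc_dim)
  then show ?thesis unfolding frob_adj using assms by simp
qed

lemma frob_nonneg: "frob X \<ge> 0" unfolding frob_def by (simp add: sum_nonneg)

lemma frob_sq: "(frob X)\<^sup>2 = (\<Sum>a<dim_row X. \<Sum>b<dim_col X. (cmod (X $$ (a,b)))\<^sup>2)"
  unfolding frob_def by (simp add: sum_nonneg)

lemma frob_vstack:
  assumes "A \<in> carrier_mat ra c" "B \<in> carrier_mat rb c"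
  shows "(frob (vstack A B))\<^sup>2 = (frob A)\<^sup>2 + (frob B)\<^sup>2"
  unfolding frob_sq using assms by (simp add: sum_split_add vstack_def)

lemma frob_zero_iff:
  assumes "X \<in> carrier_mat r c" "frob X = 0" shows "X = 0\<^sub>m r c"
proof (rule eq_matI)
  fix a b assume ab: "a < dim_row (0\<^sub>m r c :: complex mat)" "b < dim_col (0\<^sub>m r c :: complex mat)"
  have "(\<Sum>a<dim_row X. \<Sum>b<dim_col X. (cmod (X $$ (a,b)))\<^sup>2) = 0"
    using frob_sq[of X] assms by simp
  hence "\<forall>a\<in>{..<dim_row X}. (\<Sum>b<dim_col X. (cmod (X $$ (a,b)))\<^sup>2) = 0"
    by (subst (asm) sum_nonneg_eq_0_iff) (auto intro: sum_nonneg)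
  hence "\<forall>a\<in>{..<dim_row X}. \<forall>b\<in>{..<dim_col X}. (cmod (X $$ (a,b)))\<^sup>2 = 0"
    by (auto simp: sum_nonneg_eq_0_iff)
  thus "X $$ (a,b) = 0\<^sub>m r c $$ (a,b)" using ab assms by auto
qed (use assms in auto)

lemma minv_props:
  assumes "invertible_mat X" "X \<in> carrier_mat m m"
  shows "minv X \<in> carrier_mat m m \<and> X * minv X = 1\<^sub>m m \<and> minv X * X = 1\<^sub>m m"
proof -
  obtain B where B0: "X * B = 1\<^sub>m m" "B * X = 1\<^sub>m (dim_row B)"
    using assms unfolding invertible_mat_def inverts_mat_def by auto
  have "dim_col B = m" using B0(1) assms(2) by (metis index_one_mat(3) index_mult_mat(3))
  moreover have "dim_row B = m" using B0(2) assms(2) by (metis index_one_mat(3) index_mult_mat(3) carrier_matD(2))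
  moreover have B: "X * B = 1\<^sub>m m" "B * X = 1\<^sub>m m" using B0 calculation by auto
  ultimately have "B \<in> carrier_mat m m" by auto
  hence "\<exists>Y. Y \<in> carrier_mat (dim_row X) (dim_row X) \<and> X * Y = 1\<^sub>m (dim_row X) \<and> Y * X = 1\<^sub>m (dim_row X)"
    using B assms by auto
  from someI_ex[OF this] show ?thesis using assms unfolding minv_def by auto
qed

lemma carrier_eq: "a = b \<Longrightarrow> c = d \<Longrightarrow> X \<in> carrier_mat a c \<Longrightarrow> X \<in> carrier_mat b d" by simp

lemma gmres_char:
  fixes Hb S0 Q R Y0 :: "complex mat"
  assumes Q: "Q \<in> carrier_mat ((k+1)*L) ((k+1)*L)" "mat_adjoint Q * Q = 1\<^sub>m ((k+1)*L)"
    and R: "R \<in> carrier_mat (k*L) (k*L)" "invertible_mat R"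
    and QH: "Q * lead ((k+1)*L) (k*L) Hb = stack_zero R L"
    and Y0: "Y0 \<in> carrier_mat (k*L) L" and S0: "S0 \<in> carrier_mat L L"
    and top: "row_range 0 (k*L) (Q * (lead ((k+1)*L) (k*L) Hb * Y0 - Eblk (k+1) L * S0)) = 0\<^sub>m (k*L) L"
  shows "gmres_Y Hb S0 k L = Y0"
proof -
  define H where "H = lead ((k+1)*L) (k*L) Hb"
  define E where "E = Eblk (k+1) L * S0"
  define K where "K = row_range (k*L) L (Q * (H * Y0 - E))"
  have kk: "(k+1)*L = k*L + L" by simp
  have Hc: "H \<in> carrier_mat (k*L+L) (k*L)" unfolding H_def lead_def by (simp add: add.commute)
  have Ec: "E \<in> carrier_mat (k*L+L) L" unfolding E_def Eblk_def using S0 by auto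
  have Qc: "Q \<in> carrier_mat (k*L+L) (k*L+L)" using Q(1) by (simp add: add.commute)
  have Qa: "mat_adjoint Q * Q = 1\<^sub>m (k*L+L)" using Q(2) by (simp add: add.commute)
  have Kc: "K \<in> carrier_mat L L" unfolding K_def row_range_def using Ec by simp
  have HY0E: "H * Y0 - E \<in> carrier_mat (k*L+L) L" using Hc Y0 Ec by auto
  have split0: "Q * (H * Y0 - E) = vstack (0\<^sub>m (k*L) L) K"
    using vstack_split[of "Q * (H * Y0 - E)" "k*L" L L] Qc HY0E top
    unfolding K_def H_def E_def by auto
  have key: "Q * (H * Y - E) = vstack (R * (Y - Y0)) K" if Y: "Y \<in> carrier_mat (k*L) L" for Y
  proof -
    have "H * Y - E = H * (Y - Y0) + (H * Y0 - E)"
      using Hc Y Y0 Ec by (subst mult_minus_distrib_mat[of _ _ "k*L"]) (auto intro!: eq_matI)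
    hence "Q * (H * Y - E) = Q * H * (Y - Y0) + Q * (H * Y0 - E)"
      using Qc Hc Y Y0 Ec by (simp add: mult_add_dim assoc_dim)
    also have "Q * H = vstack R (0\<^sub>m L (k*L))" using QH R unfolding H_def stack_zero_vstack by auto
    also have "vstack R (0\<^sub>m L (k*L)) * (Y - Y0) = vstack (R * (Y - Y0)) (0\<^sub>m L L)"
      using R Y Y0 by (subst vstack_mult[of _ "k*L" "k*L" _ L _ L]) auto
    also have "vstack (R * (Y - Y0)) (0\<^sub>m L L) + Q * (H * Y0 - E) = vstack (R * (Y - Y0)) K"
    proof -
      have rc: "R * (Y - Y0) \<in> carrier_mat (k*L) L" using R Y Y0 by auto
      show ?thesis unfolding split0 using rc Kc by (subst vstack_add[of _ "k*L" L _ L]) auto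
    qed
    finally show ?thesis .
  qed
  have eq: "(frob (H * Y - E))\<^sup>2 = (frob (R * (Y - Y0)))\<^sup>2 + (frob K)\<^sup>2" if Y: "Y \<in> carrier_mat (k*L) L" for Y
  proof -
    have "H * Y - E \<in> carrier_mat (k*L+L) L" using Hc Y Ec by auto
    hence "frob (H * Y - E) = frob (Q * (H * Y - E))"
      using frob_unitary[of Q "k*L+L" "H * Y - E" L] Qa Qc Hc Y Ec by auto
    also have "\<dots> = frob (vstack (R * (Y - Y0)) K)" using key[OF Y] by simp
    moreover have "R * (Y - Y0) \<in> carrier_mat (k*L) L" using R Y Y0 by auto
    ultimately show ?thesis using frob_vstack[of "R * (Y - Y0)" "k*L" L K L] Kc by auto
  qed
  have eq0: "(frob (H * Y0 - E))\<^sup>2 = (frob K)\<^sup>2"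
  proof -
    have "R * (Y0 - Y0) = 0\<^sub>m (k*L) L" using R Y0 by simp
    moreover have "frob (0\<^sub>m (k*L) L) = 0" by (simp add: frob_def)
    ultimately show ?thesis using eq[OF Y0] by simp
  qed
  show ?thesis
    unfolding gmres_Y_def H_def[symmetric] E_def[symmetric]
  proof (rule the_equality)
    show "Y0 \<in> carrier_mat (k * L) L \<and> (\<forall>Y'\<in>(carrier_mat (k * L) L :: complex mat set). frob (H * Y0 - E) \<le> frob (H * Y' - E))"
    proof (intro conjI ballI Y0)
      fix Y' :: "complex mat" assume Y': "Y' \<in> carrier_mat (k * L) L"
      have "(frob (H * Y0 - E))\<^sup>2 \<le> (frob (H * Y' - E))\<^sup>2" using eq[OF Y'] eq0 by simp
      thus "frob (H * Y0 - E) \<le> frob (H * Y' - E)"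
        by (rule power2_le_imp_le) (rule frob_nonneg)
    qed
  next
    fix Y :: "complex mat" assume Y: "Y \<in> carrier_mat (k * L) L \<and> (\<forall>Y'\<in>carrier_mat (k * L) L. frob (H * Y - E) \<le> frob (H * Y' - E))"
    hence le: "frob (H * Y - E) \<le> frob (H * Y0 - E)" using Y0 by auto
    have "(frob (H * Y - E))\<^sup>2 \<le> (frob (H * Y0 - E))\<^sup>2"
      using le by (rule power_mono) (rule frob_nonneg)
    hence "(frob (R * (Y - Y0)))\<^sup>2 \<le> 0" using eq Y eq0 by auto
    hence "frob (R * (Y - Y0)) = 0" by (simp add: frob_def)
    moreover have "R * (Y - Y0) \<in> carrier_mat (k*L) L" using R Y Y0 by auto
    ultimately have RZ: "R * (Y - Y0) = 0\<^sub>m (k*L) L" using frob_zero_iff[of "R * (Y - Y0)" "k*L" L] by auto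
    obtain Ri where Ri: "Ri \<in> carrier_mat (k*L) (k*L)" "Ri * R = 1\<^sub>m (k*L)"
      using minv_props[OF R(2) R(1)] by blast
    have "Y - Y0 = Ri * (R * (Y - Y0))" using Ri R Y Y0 by (simp add: assoc_dim[symmetric])
    also have "\<dots> = 0\<^sub>m (k*L) L" using RZ Ri by simp
    finally have z: "Y - Y0 = 0\<^sub>m (k*L) L" .
    show "Y = Y0"
    proof (rule eq_matI)
      fix i j assume ij: "i < dim_row Y0" "j < dim_col Y0"
      from arg_cong[OF z, of "\<lambda>M. M $$ (i,j)"] show "Y $$ (i,j) = Y0 $$ (i,j)" using ij Y Y0 by auto
    qed (use Y Y0 in auto)
  qed
qed

lemma Qemb_last:
  assumes "Om \<in> carrier_mat (2*L) (2*L)"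
  shows "Qemb Om (Suc i) (Suc i + 1) L = four_block_mat (1\<^sub>m (i*L)) (0\<^sub>m (i*L) (2*L)) (0\<^sub>m (2*L) (i*L)) Om"
  by (rule eq_matI) (use assms in \<open>auto simp: Qemb_def four_block_mat_def Let_def\<close>)

lemma Qemb_ext:
  assumes "Suc i + 1 \<le> m"
  shows "Qemb Om (Suc i) (m+1) L = four_block_mat (Qemb Om (Suc i) m L) (0\<^sub>m (m*L) L) (0\<^sub>m L (m*L)) (1\<^sub>m L)"
proof -
  have "(Suc i + 1) * L \<le> m * L" using assms by (rule mult_le_mono1)
  thus ?thesis
    by (intro eq_matI) (auto simp: Qemb_def four_block_mat_def Let_def)
qed

lemma Qemb_carrier: "Qemb Om i m L \<in> carrier_mat (m*L) (m*L)"
  by (simp add: Qemb_def)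

lemma qprod_carrier: "qprod Om i m L \<in> carrier_mat (m*L) (m*L)"
  by (induct i) (auto intro: mult_carrier_mat[OF Qemb_carrier])

lemma qprod_ext:
  assumes "i < m"
  shows "qprod Om i (m+1) L = four_block_mat (qprod Om i m L) (0\<^sub>m (m*L) L) (0\<^sub>m L (m*L)) (1\<^sub>m L)"
  using assms
proof (induct i)
  case 0
  show ?case using four_block_one_mat[of "m*L" L] by (simp add: add.commute)
next
  case (Suc i)
  have "qprod Om (Suc i) (m+1) L = Qemb (Om (Suc i)) (Suc i) (m+1) L * qprod Om i (m+1) L" by simp
  also have "\<dots> = four_block_mat (Qemb (Om (Suc i)) (Suc i) m L) (0\<^sub>m (m*L) L) (0\<^sub>m L (m*L)) (1\<^sub>m L)
     * four_block_mat (qprod Om i m L) (0\<^sub>m (m*L) L) (0\<^sub>m L (m*L)) (1\<^sub>m L)"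
    using Suc Qemb_ext[of i m "Om (Suc i)" L] by simp
  also have "\<dots> = four_block_mat (Qemb (Om (Suc i)) (Suc i) m L * qprod Om i m L) (0\<^sub>m (m*L) L) (0\<^sub>m L (m*L)) (1\<^sub>m L)"
    using mult_four_block_mat[OF Qemb_carrier[of "Om (Suc i)" "Suc i" m L] zero_carrier_mat zero_carrier_mat one_carrier_mat
       qprod_carrier[of Om i m L] zero_carrier_mat zero_carrier_mat one_carrier_mat]
      Qemb_carrier[of "Om (Suc i)" "Suc i" m L] qprod_carrier[of Om i m L] by simp
  finally show ?case by simp
qed

lemma Qbar_step:
  assumes "Om (Suc k) \<in> carrier_mat (2*L) (2*L)"
  shows "Qbar Om (Suc k) L = four_block_mat (1\<^sub>m (k*L)) (0\<^sub>m (k*L) (2*L)) (0\<^sub>m (2*L) (k*L)) (Om (Suc k))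
     * four_block_mat (Qbar Om k L) (0\<^sub>m ((k+1)*L) L) (0\<^sub>m L ((k+1)*L)) (1\<^sub>m L)"
proof -
  have "Qbar Om (Suc k) L = Qemb (Om (Suc k)) (Suc k) (Suc k + 1) L * qprod Om k (Suc k + 1) L"
    unfolding Qbar_def by simp
  also have "qprod Om k (Suc k + 1) L = four_block_mat (Qbar Om k L) (0\<^sub>m ((k+1)*L) L) (0\<^sub>m L ((k+1)*L)) (1\<^sub>m L)"
    unfolding Qbar_def using qprod_ext[of k "Suc k" Om L] by simp
  finally show ?thesis using Qemb_last[OF assms] by simp
qed

lemma unitary_eq: "a = b \<Longrightarrow> unitary a U \<Longrightarrow> unitary b U" by simp

lemma Qbar_unitary:
  assumes "\<forall>i. 1 \<le> i \<and> i \<le> j \<longrightarrow> unitary (2*L) (Om i)" "k \<le> j"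
  shows "unitary ((k+1)*L) (Qbar Om k L)"
  using assms(2)
proof (induct k)
  case 0
  show ?case by (simp add: Qbar_def unitary_def)
next
  case (Suc k)
  have U: "unitary (2*L) (Om (Suc k))" using assms(1) Suc by auto
  hence c: "Om (Suc k) \<in> carrier_mat (2*L) (2*L)" unfolding unitary_def by auto
  have u1: "unitary (k*L + 2*L) (four_block_mat (1\<^sub>m (k*L)) (0\<^sub>m (k*L) (2*L)) (0\<^sub>m (2*L) (k*L)) (Om (Suc k)))"
    by (rule unitary_diag[OF _ U]) (simp add: unitary_def)
  have u2: "unitary ((k+1)*L + L) (four_block_mat (Qbar Om k L) (0\<^sub>m ((k+1)*L) L) (0\<^sub>m L ((k+1)*L)) (1\<^sub>m L))"
    by (rule unitary_diag) (use Suc in \<open>auto simp: unitary_def\<close>)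
  show ?case unfolding Qbar_step[of Om k L, OF c]
    by (rule unitary_mult; rule unitary_eq[OF _ u1] unitary_eq[OF _ u2]) (simp_all add: algebra_simps)
qed

lemma lead_full: "X \<in> carrier_mat r c \<Longrightarrow> lead r c X = X"
  by (rule eq_matI) (auto simp: lead_def)

lemma lead_carrier[simp]: "lead r c X \<in> carrier_mat r c"
  by (simp add: lead_def)

lemma lead_dims[simp]: "dim_row (lead r c X) = r" "dim_col (lead r c X) = c"
  by (auto simp: lead_def)

lemma stack_zero_carrier[simp]: "Y \<in> carrier_mat p c \<Longrightarrow> stack_zero Y L \<in> carrier_mat (p+L) c"
  by (simp add: stack_zero_def)

lemma stack_zero_dims[simp]: "dim_row (stack_zero Y L) = dim_row Y + L" "dim_col (stack_zero Y L) = dim_col Y"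
  by (auto simp: stack_zero_def)

lemma rr_sz: "Y \<in> carrier_mat p c \<Longrightarrow> row_range p L (stack_zero Y L) = 0\<^sub>m L c"
  by (rule eq_matI) (auto simp: row_range_def stack_zero_def)

lemma lead_sz:
  assumes Y: "Y \<in> carrier_mat p c"
  shows "lead r (p+L) X * stack_zero Y L = lead r p X * Y"
proof (rule eq_matI)
  fix a b assume ab: "a < dim_row (lead r p X * Y)" "b < dim_col (lead r p X * Y)"
  have "(lead r (p+L) X * stack_zero Y L) $$ (a,b) = (\<Sum>k<p+L. lead r (p+L) X $$ (a,k) * stack_zero Y L $$ (k,b))"
    by (rule mult_entry'[of _ r "p+L" _ c]) (use ab Y in auto)
  also have "\<dots> = (\<Sum>k<p. lead r (p+L) X $$ (a,k) * stack_zero Y L $$ (k,b))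
     + (\<Sum>k<L. lead r (p+L) X $$ (a,p+k) * stack_zero Y L $$ (p+k,b))" by (rule sum_split_add)
  also have "\<dots> = (\<Sum>k<p. lead r p X $$ (a,k) * Y $$ (k,b))"
    using ab Y by (auto simp: lead_def stack_zero_def)
  also have "\<dots> = (lead r p X * Y) $$ (a,b)"
    by (rule mult_entry'[symmetric, of _ r p _ c]) (use ab Y in auto)
  finally show "(lead r (p+L) X * stack_zero Y L) $$ (a,b) = (lead r p X * Y) $$ (a,b)" .
qed (use Y in auto)

lemma Hb_mult:
  assumes Hb: "Hb \<in> carrier_mat (p+L+L) (p+L)" and Z: "Z \<in> carrier_mat (p+L) c"
    and hz: "\<And>a k. p+L \<le> a \<Longrightarrow> a < p+L+L \<Longrightarrow> k < p \<Longrightarrow> Hb $$ (a,k) = 0"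
  shows "Hb * Z = vstack (lead (p+L) (p+L) Hb * Z) (mat L L (\<lambda>(a,b). Hb $$ (p+L+a, p+b)) * row_range p L Z)"
proof (rule eq_matI)
  fix a b assume ab: "a < dim_row (vstack (lead (p+L) (p+L) Hb * Z) (mat L L (\<lambda>(a,b). Hb $$ (p+L+a, p+b)) * row_range p L Z))"
    "b < dim_col (vstack (lead (p+L) (p+L) Hb * Z) (mat L L (\<lambda>(a,b). Hb $$ (p+L+a, p+b)) * row_range p L Z))"
  hence a: "a < p+L+L" and b: "b < c" using Z by (auto simp: row_range_def)
  have "(Hb * Z) $$ (a,b) = (\<Sum>k<p+L. Hb $$ (a,k) * Z $$ (k,b))"
    by (rule mult_entry'[of _ _ "p+L" _ c]) (use a b Hb Z in auto)
  also have "\<dots> = (\<Sum>k<p. Hb $$ (a,k) * Z $$ (k,b)) + (\<Sum>k<L. Hb $$ (a,p+k) * Z $$ (p+k,b))"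
    by (rule sum_split_add)
  also have "\<dots> = vstack (lead (p+L) (p+L) Hb * Z) (mat L L (\<lambda>(a,b). Hb $$ (p+L+a, p+b)) * row_range p L Z) $$ (a,b)"
  proof (cases "a < p+L")
    case True
    have "vstack (lead (p+L) (p+L) Hb * Z) (mat L L (\<lambda>(a,b). Hb $$ (p+L+a, p+b)) * row_range p L Z) $$ (a,b)
       = (lead (p+L) (p+L) Hb * Z) $$ (a,b)" using True b Z by (simp add: vstack_def)
    also have "\<dots> = (\<Sum>k<p+L. lead (p+L) (p+L) Hb $$ (a,k) * Z $$ (k,b))"
      by (rule mult_entry'[of _ _ "p+L" _ c]) (use True b Z in auto)
    also have "\<dots> = (\<Sum>k<p. Hb $$ (a,k) * Z $$ (k,b)) + (\<Sum>k<L. Hb $$ (a,p+k) * Z $$ (p+k,b))"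
      unfolding sum_split_add using True by (simp add: lead_def)
    finally show ?thesis by simp
  next
    case False
    have z: "(\<Sum>k<p. Hb $$ (a,k) * Z $$ (k,b)) = 0" using hz[of a] False a by simp
    have "vstack (lead (p+L) (p+L) Hb * Z) (mat L L (\<lambda>(a,b). Hb $$ (p+L+a, p+b)) * row_range p L Z) $$ (a,b)
       = (mat L L (\<lambda>(a,b). Hb $$ (p+L+a, p+b)) * row_range p L Z) $$ (a - (p+L),b)" using False a b Z by (simp add: vstack_def)
    also have "\<dots> = (\<Sum>k<L. mat L L (\<lambda>(a,b). Hb $$ (p+L+a, p+b)) $$ (a - (p+L),k) * row_range p L Z $$ (k,b))"
      by (rule mult_entry'[of _ _ L _ c]) (use False a b Z in \<open>auto simp: row_range_def\<close>)
    also have "\<dots> = (\<Sum>k<L. Hb $$ (a,p+k) * Z $$ (p+k,b))"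
      using False a b Z by (auto simp: row_range_def intro!: sum.cong)
    finally show ?thesis using z by simp
  qed
  finally show "(Hb * Z) $$ (a,b) = vstack (lead (p+L) (p+L) Hb * Z) (mat L L (\<lambda>(a,b). Hb $$ (p+L+a, p+b)) * row_range p L Z) $$ (a,b)" .
qed (use Hb Z in \<open>auto simp: row_range_def\<close>)

lemma lead_E:
  fixes W :: "complex mat"
  assumes "W \<in> carrier_mat n (k*L)" "L \<le> k*L"
  shows "lead n L W = W * Eblk k L"
proof (rule eq_matI)
  fix a b assume ab: "a < dim_row (W * Eblk k L)" "b < dim_col (W * Eblk k L)"
  hence ab': "a < n" "b < L" using assms by (auto simp: Eblk_def)
  have "(W * Eblk k L) $$ (a,b) = (\<Sum>l<k*L. W $$ (a,l) * Eblk k L $$ (l,b))"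
    by (rule mult_entry'[of _ _ "k*L" _ L]) (use assms ab' in \<open>auto simp: Eblk_def\<close>)
  also have "\<dots> = (\<Sum>l<k*L. if l = b then W $$ (a,l) else 0)"
    by (rule sum.cong) (use ab' assms in \<open>auto simp: Eblk_def\<close>)
  also have "\<dots> = W $$ (a,b)"
  proof -
    have "b < k*L" using ab' assms(2) by linarith
    thus ?thesis by (simp add: sum.delta')
  qed
  finally show "lead n L W $$ (a,b) = (W * Eblk k L) $$ (a,b)" using ab' by (simp add: lead_def)
qed (use assms in \<open>auto simp: Eblk_def\<close>)

lemma Eblk_split:
  assumes "1 \<le> j" shows "Eblk (j+1) L = vstack (Eblk j L) (0\<^sub>m L L :: complex mat)"
proof -
  have "L \<le> j*L" using assms by simp
  hence "\<And>x. x < L \<Longrightarrow> x < j*L" by linarith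
  show ?thesis by (rule eq_matI) (use \<open>\<And>x. x < L \<Longrightarrow> x < j*L\<close> in \<open>auto simp: Eblk_def vstack_def\<close>)
qed

lemma rank_kernel:
  fixes F :: "complex mat"
  assumes F: "F \<in> carrier_mat n nc" and r: "vec_space.rank n F = nc"
    and v: "v \<in> carrier_vec nc" "F *\<^sub>v v = 0\<^sub>v n"
  shows "v = 0\<^sub>v nc"
proof (rule ccontr)
  assume nz: "v \<noteq> 0\<^sub>v nc"
  interpret vec_space "TYPE(complex)" n .
  show False
  proof (cases "distinct (cols F)")
    case True
    then have "lin_indpt (set (cols F))" using full_rank_lin_indpt r F by auto
    then show False using lin_depI[OF F v(1) nz v(2)] True by blast
  next
    case False
    obtain S where S: "maximal S (\<lambda>T. T \<subseteq> set (cols F) \<and> lin_indpt T)"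
      using maximal_exists[of "(\<lambda>T. T \<subseteq> set (cols F) \<and> lin_indpt T)" "card (set (cols F))" "{}"]
      by (meson List.finite_set card_mono empty_iff empty_subsetI finite_lin_indpt2 rev_finite_subset)
    then have "card S \<le> card (set (cols F))" by (simp add: card_mono maximal_def)
    then have "card S < nc"
      using F cols_length card_length \<open>\<not> distinct (cols F)\<close> card_distinct carrier_matD(2) nat_less_le
      by (metis dual_order.antisym dual_order.trans)
    then show False using rank_card_indpt[OF F S] r by simp
  qed
qed

lemma diag_mult: "diag_real L c * diag_real L d = diag_real L (\<lambda>i. c i * d i)"
proof (rule eq_matI)
  fix a b assume ab: "a < dim_row (diag_real L (\<lambda>i. c i * d i))" "b < dim_col (diag_real L (\<lambda>i. c i * d i))"
  hence ab': "a < L" "b < L" by (auto simp: diag_real_def)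
  have "(diag_real L c * diag_real L d) $$ (a,b) = (\<Sum>k<L. diag_real L c $$ (a,k) * diag_real L d $$ (k,b))"
    by (rule mult_entry'[of _ L L _ L]) (use ab' in \<open>auto simp: diag_real_def\<close>)
  also have "\<dots> = (\<Sum>k<L. if k = a then (if a = b then complex_of_real (c a * d a) else 0) else 0)"
    by (rule sum.cong) (use ab' in \<open>auto simp: diag_real_def\<close>)
  also have "\<dots> = diag_real L (\<lambda>i. c i * d i) $$ (a,b)" using ab' by (simp add: diag_real_def)
  finally show "(diag_real L c * diag_real L d) $$ (a,b) = diag_real L (\<lambda>i. c i * d i) $$ (a,b)" .
qed (auto simp: diag_real_def)

lemma diag_add_one:
  assumes "\<forall>i<L. (c i)\<^sup>2 + (s i)\<^sup>2 = 1"
  shows "diag_real L (\<lambda>i. c i * c i) + diag_real L (\<lambda>i. s i * s i) = 1\<^sub>m L"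
proof (rule eq_matI)
  fix a b assume "a < dim_row (1\<^sub>m L :: complex mat)" "b < dim_col (1\<^sub>m L :: complex mat)"
  then show "(diag_real L (\<lambda>i. c i * c i) + diag_real L (\<lambda>i. s i * s i)) $$ (a,b) = 1\<^sub>m L $$ (a,b)"
  proof -
    assume ab: "a < dim_row (1\<^sub>m L :: complex mat)" "b < dim_col (1\<^sub>m L :: complex mat)"
    show ?thesis
    proof (cases "a = b")
      case True
      have "c b * c b + s b * s b = 1" using assms ab by (auto simp: power2_eq_square)
      hence "complex_of_real (c b * c b + s b * s b) = 1" by simp
      thus ?thesis using True ab by (simp add: diag_real_def)
    qed (use ab in \<open>auto simp: diag_real_def\<close>)
  qed
qed (auto simp: diag_real_def)

lemma diag_carrier[simp]: "diag_real L c \<in> carrier_mat L L" by (simp add: diag_real_def)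

lemma Om_blocks:
  assumes "Om \<in> carrier_mat (2*L) (2*L)"
  shows "Om = four_block_mat (blk Om 1 1 L) (blk Om 1 2 L) (blk Om 2 1 L) (blk Om 2 2 L)"
  by (rule eq_matI) (use assms in \<open>auto simp: four_block_mat_def blk_def\<close>)

lemma blk_carrier[simp]: "blk X i k L \<in> carrier_mat L L" by (simp add: blk_def)

lemma key_alg:
  fixes Q11 Q12 P1 P2 Ct Ci w hy M1 M2 :: "complex mat"
  assumes c: "Q11 \<in> carrier_mat L L" "Q12 \<in> carrier_mat L L" "P1 \<in> carrier_mat L L" "P2 \<in> carrier_mat L L"
     "Ct \<in> carrier_mat L L" "Ci \<in> carrier_mat L L" "w \<in> carrier_mat L L"
    and inv: "Ct * Ci = 1\<^sub>m L" "Ci * Ct = 1\<^sub>m L"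
    and w: "Ct = P1 * w" and hy: "hy = P2 * w"
    and u: "Q11 * P1 + Q12 * P2 = 1\<^sub>m L"
    and M1: "M1 = Ci * P1 * Q11 * Ct" and M2: "M2 = 1\<^sub>m L - M1"
  shows "Q11 * (- Ct * M2) + Q12 * (hy * M1) = 0\<^sub>m L L"
proof -
  have wc: "w * Ci \<in> carrier_mat L L" using c by auto
  have "P1 * (w * Ci) = 1\<^sub>m L" using inv w c assoc_dim[of P1 w Ci] by simp
  hence wp: "w * Ci * P1 = 1\<^sub>m L" using mat_mult_left_right_inverse[OF c(3) wc] by simp
  define A where "A = Q11 * Ct"
  define X where "X = Q11 * (P1 * (Q11 * Ct))"
  have Ac: "A \<in> carrier_mat L L" and Xc: "X \<in> carrier_mat L L" using c unfolding A_def X_def by auto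
  have e1: "w * (Ci * (P1 * (Q11 * Ct))) = Q11 * Ct"
  proof -
    have "w * (Ci * (P1 * (Q11 * Ct))) = (w * Ci * P1) * (Q11 * Ct)" using c by (simp add: assoc_dim)
    thus ?thesis using wp c by simp
  qed
  have "Q12 * (hy * M1) = Q12 * (P2 * (Q11 * Ct))"
    unfolding hy M1 using c e1 by (simp add: assoc_dim)
  also have "\<dots> = (Q12 * P2) * (Q11 * Ct)" using c by (simp add: assoc_dim)
  also have "Q12 * P2 = 1\<^sub>m L - Q11 * P1"
  proof (rule eq_matI)
    fix i k assume ik: "i < dim_row (1\<^sub>m L - Q11 * P1)" "k < dim_col (1\<^sub>m L - Q11 * P1)"
    have "(Q11 * P1 + Q12 * P2) $$ (i,k) = 1\<^sub>m L $$ (i,k)" by (simp only: u)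
    hence "(Q11 * P1) $$ (i,k) + (Q12 * P2) $$ (i,k) = 1\<^sub>m L $$ (i,k)" using ik c by simp
    thus "(Q12 * P2) $$ (i,k) = (1\<^sub>m L - Q11 * P1) $$ (i,k)" using ik c
      by (simp del: index_mult_mat(1) index_one_mat(1)) (metis add_diff_cancel_left')
  qed (use c in simp_all)
  also have "(1\<^sub>m L - Q11 * P1) * (Q11 * Ct) = A - X"
    unfolding A_def X_def using c by (simp add: minus_mult_dim assoc_dim)
  finally have b: "Q12 * (hy * M1) = A - X" .
  have "Ct * M2 = Ct - Ct * M1" unfolding M2 using c M1 by (simp add: mult_minus_dim)
  also have "Ct * M1 = P1 * (Q11 * Ct)"
  proof -
    have "Ct * M1 = (Ct * Ci) * (P1 * (Q11 * Ct))" unfolding M1 using c by (simp add: assoc_dim)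
    thus ?thesis using inv c by simp
  qed
  finally have "Q11 * (Ct * M2) = A - X" unfolding A_def X_def using c by (simp add: mult_minus_dim)
  moreover have M1c: "M1 \<in> carrier_mat L L" unfolding M1 using c by auto
  moreover have M2c: "M2 \<in> carrier_mat L L" unfolding M2 using M1c by (rule minus_carrier_mat)
  moreover have "- Ct * M2 = - (Ct * M2)" by (rule uminus_mult_left_mat) (use c M2c in simp)
  moreover have "Q11 * (- (Ct * M2)) = - (Q11 * (Ct * M2))" by (rule uminus_mult_right_mat) (use c M2c in simp)
  ultimately have a: "Q11 * (- Ct * M2) = - (A - X)" by simp
  show ?thesis unfolding a b by (rule eq_matI) (use Ac Xc in auto)
qed

lemma diag_vstack:
  assumes "A \<in> carrier_mat a a" "D \<in> carrier_mat b b" "X1 \<in> carrier_mat a c" "X2 \<in> carrier_mat b c"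
  shows "four_block_mat A (0\<^sub>m a b) (0\<^sub>m b a) D * vstack X1 X2 = vstack (A * X1) (D * (X2::'a::comm_ring mat))"
proof -
  have "four_block_mat A (0\<^sub>m a b) (0\<^sub>m b a) D * vstack X1 X2
     = vstack (A * X1 + 0\<^sub>m a b * X2) (0\<^sub>m b a * X1 + D * X2)"
    by (rule fb_vstack) (use assms in auto)
  also have "A * X1 + 0\<^sub>m a b * X2 = A * X1" using assms by simp
  also have "0\<^sub>m b a * X1 + D * X2 = D * X2"
  proof -
    have "0\<^sub>m b a * X1 = 0\<^sub>m b c" using assms by simp
    moreover have "D * X2 \<in> carrier_mat b c" using assms by auto
    ultimately show ?thesis by simp
  qed
  finally show ?thesis .
qed

lemma lead_fb: "A \<in> carrier_mat r c \<Longrightarrow> lead r c (four_block_mat A B C D) = A"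
  by (rule eq_matI) (auto simp: lead_def four_block_mat_def)

lemma vec_col:
  assumes "X \<in> carrier_mat r L" "v \<in> carrier_vec L"
  shows "X *\<^sub>v v = col (X * mat L 1 (\<lambda>(a,_). v $ a)) 0"
proof -
  have "col (mat L 1 (\<lambda>(a,_). v $ a)) 0 = v" using assms(2) by (auto intro!: eq_vecI)
  thus ?thesis using assms by (auto intro!: eq_vecI)
qed



theorem mainTheorem8:
  fixes n L j :: nat
    and A B X0 V1 S0 W Hb :: "complex mat"
    and Om :: "nat \<Rightarrow> complex mat"
    and U1 U2 V :: "complex mat"
    and c s :: "nat \<Rightarrow> real"
  assumes "n \<ge> 1" and "L \<ge> 1" and "j \<ge> 2"
    and A: "A \<in> carrier_mat n n" and B: "B \<in> carrier_mat n L" and X0: "X0 \<in> carrier_mat n L"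
    (* reduced QR of F_0 = B - A X_0 *)
    and V1: "V1 \<in> carrier_mat n L" and "orthonormal_cols V1"
    and S0: "S0 \<in> carrier_mat L L" and "upper_triangular S0"
    and "B - A * X0 = V1 * S0"
    (* block Arnoldi: W = W_{j+1}, Hb = \bar H_j *)
    and W: "W \<in> carrier_mat n ((j+1)*L)" and "orthonormal_cols W"
    and "lead n L W = V1"
    and Hb: "Hb \<in> carrier_mat ((j+1)*L) (j*L)"
    and "A * lead n (j*L) W = W * Hb"
    and "\<forall>i k. 1 \<le> k \<and> k \<le> j \<and> k + 1 < i \<and> i \<le> j + 1 \<longrightarrow> blk Hb i k L = 0\<^sub>m L L"
    and "\<forall>k. 1 \<le> k \<and> k \<le> j \<longrightarrow> upper_triangular (blk Hb (k+1) k L)"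
    (* \bar H_j has full column rank *)
    and "vec_space.rank ((j+1)*L) Hb = j*L"
    (* block QR factorization *)
    and "\<forall>i. 1 \<le> i \<and> i \<le> j \<longrightarrow> unitary (2*L) (Om i)"
    and "\<forall>k. 1 \<le> k \<and> k \<le> j \<longrightarrow> (\<exists>R. R \<in> carrier_mat (k*L) (k*L) \<and> upper_triangular R \<and>
            invertible_mat R \<and> Qbar Om k L * lead ((k+1)*L) (k*L) Hb = stack_zero R L)"
    (* additional hypotheses *)
    and "invertible_mat (lead (j*L) (j*L) Hb)"
    and "vec_space.rank n (B - A * gmres_X X0 W Hb S0 (j-1) L) = L"
    (* CS decomposition of the first block column of Omega_j *)
    and "unitary L U1" and "unitary L U2" and "unitary L V"
    and "\<forall>i<L. c i \<ge> 0 \<and> s i \<ge> 0 \<and> (c i)\<^sup>2 + (s i)\<^sup>2 = 1"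
    and "blk (Om j) 1 1 L = U1 * diag_real L c * mat_adjoint V"
    and "blk (Om j) 2 1 L = U2 * diag_real L s * mat_adjoint V"
  shows "let Ct = row_range ((j-1)*L) L (Qbar Om (j-1) L * Eblk j L * S0);
             M1 = minv Ct * V * (diag_real L c * diag_real L c) * mat_adjoint V * Ct;
             M2 = minv Ct * V * (diag_real L s * diag_real L s) * mat_adjoint V * Ct
         in invertible_mat Ct
            \<and> gmres_X X0 W Hb S0 j L = fom_X X0 W Hb S0 j L * M1 + gmres_X X0 W Hb S0 (j-1) L * M2
            \<and> M1 + M2 = 1\<^sub>m L
            \<and> M1 = minv Ct * mat_adjoint (blk (Om j) 1 1 L) * blk (Om j) 1 1 L * Ct"
proof -
  from \<open>j \<ge> 2\<close> obtain i where j: "j = Suc i" and i1: "1 \<le> i" by (cases j) auto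
  define p where "p = i*L"
  have jm: "j - 1 = i" using j by simp
  have pj: "(j-1)*L = p" unfolding p_def jm ..
  have jL: "j*L = p+L" unfolding p_def j by simp
  have j1L: "(j+1)*L = p+L+L" unfolding p_def j by simp
  have iL: "(i+1)*L = p+L" unfolding p_def by simp
  have Lpos: "L > 0" using \<open>L \<ge> 1\<close> by simp
  have Hbc: "Hb \<in> carrier_mat (p+L+L) (p+L)" using Hb unfolding j1L jL .
  have hz: "Hb $$ (a,k) = 0" if a: "p+L \<le> a" "a < p+L+L" and k: "k < p" for a k
  proof -
    define kk where "kk = k div L + 1"
    have kdiv: "k div L < i" using k Lpos unfolding p_def by (simp add: less_mult_imp_div_less)
    have "blk Hb (j+1) kk L = 0\<^sub>m L L" using assms(17) kdiv j unfolding kk_def by auto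
    hence "blk Hb (j+1) kk L $$ (a - (p+L), k mod L) = 0" using a Lpos by simp
    moreover have "blk Hb (j+1) kk L $$ (a - (p+L), k mod L) = Hb $$ (a,k)"
    proof -
      have "(j+1-1)*L + (a - (p+L)) = a" using a jL by simp
      moreover have "(kk-1)*L + k mod L = k" unfolding kk_def by simp
      ultimately show ?thesis using a Lpos by (simp add: blk_def)
    qed
    ultimately show "Hb $$ (a,k) = 0" by simp
  qed
  have OmU: "unitary (2*L) (Om j)" using assms(20) j by auto
  have Omc: "Om j \<in> carrier_mat (2*L) (2*L)" using OmU unfolding unitary_def by auto
  define Q11 where "Q11 = blk (Om j) 1 1 L"
  define Q12 where "Q12 = blk (Om j) 1 2 L"
  define Q21 where "Q21 = blk (Om j) 2 1 L"
  define Q22 where "Q22 = blk (Om j) 2 2 L"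
  have Qc: "Q11 \<in> carrier_mat L L" "Q12 \<in> carrier_mat L L" "Q21 \<in> carrier_mat L L" "Q22 \<in> carrier_mat L L"
    unfolding Q11_def Q12_def Q21_def Q22_def by auto
  have Omb: "Om j = four_block_mat Q11 Q12 Q21 Q22"
    using Om_blocks[OF Omc] unfolding Q11_def Q12_def Q21_def Q22_def .
  define Qb1 where "Qb1 = Qbar Om i L"
  have Qb1_alt: "Qbar Om (j-1) L = Qb1" unfolding Qb1_def jm ..
  have "unitary ((i+1)*L) (Qbar Om i L)" by (rule Qbar_unitary[OF assms(20)]) (use j in simp)
  hence Qb1U: "unitary (p+L) Qb1" unfolding iL Qb1_def .
  hence Qb1c: "Qb1 \<in> carrier_mat (p+L) (p+L)" and Qb1a: "mat_adjoint Qb1 * Qb1 = 1\<^sub>m (p+L)"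
    unfolding unitary_def by auto
  have "1 \<le> i \<and> i \<le> j" using i1 j by simp
  from assms(21)[rule_format, OF this] obtain R1 where
    R1: "R1 \<in> carrier_mat p p" "invertible_mat R1" "Qb1 * lead (p+L) p Hb = stack_zero R1 L"
    unfolding Qb1_def iL p_def[symmetric] by blast
  define Hm where "Hm = lead (p+L) p Hb"
  define Hj where "Hj = lead (p+L) (p+L) Hb"
  define E0 where "E0 = Eblk j L * S0"
  have E0c: "E0 \<in> carrier_mat (p+L) L" unfolding E0_def jL[symmetric] using S0 by (auto simp: Eblk_def)
  define Ct where "Ct = row_range ((j-1)*L) L (Qbar Om (j-1) L * Eblk j L * S0)"
  define G where "G = row_range 0 p (Qb1 * E0)"
  have Ct_alt: "Ct = row_range p L (Qb1 * E0)"
    unfolding Ct_def pj Qb1_alt E0_def using Qb1c S0 by (simp add: assoc_dim Eblk_def jL)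
  have QEc: "Qb1 * E0 \<in> carrier_mat (p+L) L" using Qb1c E0c by auto
  have QE: "Qb1 * E0 = vstack G Ct" unfolding G_def Ct_alt by (rule vstack_split[OF QEc])
  have Gc: "G \<in> carrier_mat p L" unfolding G_def row_range_def using QEc by auto
  have Ctc: "Ct \<in> carrier_mat L L" unfolding Ct_alt row_range_def using QEc by auto
  obtain R1i where R1i: "R1i \<in> carrier_mat p p" "R1 * R1i = 1\<^sub>m p" "R1i * R1 = 1\<^sub>m p"
    using minv_props[OF R1(2) R1(1)] by blast
  define Y1 where "Y1 = R1i * G"
  have Y1c: "Y1 \<in> carrier_mat p L" unfolding Y1_def using R1i Gc by auto
  have R1Y1: "R1 * Y1 = G" unfolding Y1_def using R1 R1i Gc by (simp add: assoc_dim[symmetric])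
  have Hmc: "Hm \<in> carrier_mat (p+L) p" unfolding Hm_def by simp
  have Res1: "Qb1 * (Hm * Y1 - E0) = vstack (0\<^sub>m p L) (- Ct)"
  proof -
    have "Qb1 * (Hm * Y1 - E0) = Qb1 * Hm * Y1 - Qb1 * E0"
      using Qb1c Hmc Y1c E0c by (simp add: mult_minus_dim assoc_dim)
    also have "Qb1 * Hm = vstack R1 (0\<^sub>m L p)" using R1 unfolding Hm_def stack_zero_vstack by simp
    also have "vstack R1 (0\<^sub>m L p) * Y1 = vstack G (0\<^sub>m L L)"
      using vstack_mult[OF R1(1) zero_carrier_mat Y1c] R1Y1 Y1c by simp
    also have "vstack G (0\<^sub>m L L) - Qb1 * E0 = vstack (G - G) (0\<^sub>m L L - Ct)"
      unfolding QE by (rule vstack_minus) (use Gc Ctc in auto)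
    also have "vstack (G - G) (0\<^sub>m L L - Ct) = vstack (0\<^sub>m p L) (- Ct)"
      using Gc Ctc by (auto intro!: arg_cong2[where f=vstack] eq_matI)
    finally show ?thesis .
  qed
  have gY1: "gmres_Y Hb S0 (j-1) L = Y1"
  proof -
    have EE: "Eblk (i+1) L = Eblk j L" using j by simp
    have "gmres_Y Hb S0 i L = Y1"
    proof (rule gmres_char[of Qb1 i L R1])
      show "Qb1 \<in> carrier_mat ((i+1)*L) ((i+1)*L)" unfolding iL by (rule Qb1c)
      show "mat_adjoint Qb1 * Qb1 = 1\<^sub>m ((i+1)*L)" unfolding iL by (rule Qb1a)
      show "R1 \<in> carrier_mat (i*L) (i*L)" unfolding p_def[symmetric] by (rule R1(1))
      show "invertible_mat R1" by (rule R1(2))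
      show "Qb1 * lead ((i+1)*L) (i*L) Hb = stack_zero R1 L" unfolding iL p_def[symmetric] by (rule R1(3))
      show "Y1 \<in> carrier_mat (i*L) L" unfolding p_def[symmetric] by (rule Y1c)
      show "S0 \<in> carrier_mat L L" by (rule S0)
      show "row_range 0 (i*L) (Qb1 * (lead ((i+1)*L) (i*L) Hb * Y1 - Eblk (i+1) L * S0)) = 0\<^sub>m (i*L) L"
        unfolding iL p_def[symmetric] EE E0_def[symmetric] Hm_def[symmetric] Res1
        by (rule row_range_vstack1) (use Ctc in auto)
    qed
    thus ?thesis unfolding jm .
  qed
  have Hjc: "Hj \<in> carrier_mat (p+L) (p+L)" unfolding Hj_def by simp
  have HjI: "invertible_mat Hj" using assms(22) unfolding Hj_def jL .
  define YF where "YF = minv Hj * E0"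
  have YFc: "YF \<in> carrier_mat (p+L) L" unfolding YF_def using minv_props[OF HjI Hjc] E0c by auto
  have HjYF: "Hj * YF = E0"
  proof -
    have mi: "minv Hj \<in> carrier_mat (p+L) (p+L)" "Hj * minv Hj = 1\<^sub>m (p+L)" using minv_props[OF HjI Hjc] by auto
    have "Hj * YF = (Hj * minv Hj) * E0" unfolding YF_def by (rule assoc_mult_mat[symmetric, OF Hjc mi(1) E0c])
    thus ?thesis using mi E0c by simp
  qed
  define h where "h = mat L L (\<lambda>(a,b). Hb $$ (p+L+a, p+b))"
  have hc: "h \<in> carrier_mat L L" unfolding h_def by simp
  define y where "y = row_range p L YF"
  have yc: "y \<in> carrier_mat L L" unfolding y_def row_range_def using YFc by auto
  have HbYF: "Hb * YF = vstack E0 (h * y)"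
    using Hb_mult[OF Hbc YFc hz] HjYF unfolding Hj_def h_def y_def by simp
  define T where "T = four_block_mat (1\<^sub>m p) (0\<^sub>m p (2*L)) (0\<^sub>m (2*L) p) (Om j)"
  define P where "P = four_block_mat Qb1 (0\<^sub>m (p+L) L) (0\<^sub>m L (p+L)) (1\<^sub>m L)"
  have QbjTP: "Qbar Om j L = T * P"
    using Qbar_step[of Om i L] Omc unfolding T_def P_def Qb1_def p_def j iL[unfolded p_def] by simp
  have "1 \<le> j \<and> j \<le> j" using j by simp
  from assms(21)[rule_format, OF this] obtain Rj where
    Rj: "Rj \<in> carrier_mat (p+L) (p+L)" "invertible_mat Rj" "Qbar Om j L * Hb = stack_zero Rj L"
    unfolding j1L jL lead_full[OF Hbc] by blast
  have "unitary ((j+1)*L) (Qbar Om j L)" by (rule Qbar_unitary[OF assms(20)]) simp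
  hence QbjU: "unitary (p+L+L) (Qbar Om j L)" unfolding j1L .
  hence Qbjc: "Qbar Om j L \<in> carrier_mat (p+L+L) (p+L+L)" and Qbja: "mat_adjoint (Qbar Om j L) * Qbar Om j L = 1\<^sub>m (p+L+L)"
    unfolding unitary_def by auto
  have Tv: "T * vstack X1 X2 = vstack X1 (Om j * X2)"
    if "X1 \<in> carrier_mat p c" "X2 \<in> carrier_mat (2*L) c" for X1 X2 c
    unfolding T_def using diag_vstack[OF one_carrier_mat Omc that] that by simp
  have Pv: "P * vstack X1 X2 = vstack (Qb1 * X1) X2"
    if "X1 \<in> carrier_mat (p+L) c" "X2 \<in> carrier_mat L c" for X1 X2 c
    unfolding P_def using diag_vstack[OF Qb1c one_carrier_mat that] that by simp
  have Omv: "Om j * vstack X1 X2 = vstack (Q11 * X1 + Q12 * X2) (Q21 * X1 + Q22 * X2)"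
    if "X1 \<in> carrier_mat L c" "X2 \<in> carrier_mat L c" for X1 X2 c
    unfolding Omb by (rule fb_vstack) (use Qc that in auto)
  have L2: "2*L = L+L" by simp
  have hyc: "h * y \<in> carrier_mat L L" using hc yc by auto
  define w where "w = Q11 * Ct + Q12 * (h * y)"
  define z where "z = Q21 * Ct + Q22 * (h * y)"
  have wc: "w \<in> carrier_mat L L" and zc: "z \<in> carrier_mat L L" unfolding w_def z_def using Qc Ctc hyc by auto
  have Ov: "Om j * vstack Ct (h * y) = vstack w z" unfolding w_def z_def by (rule Omv[OF Ctc hyc])
  have vc2: "vstack Ct (h * y) \<in> carrier_mat (2*L) L" unfolding L2 using Ctc hyc by simp
  have "Qbar Om j L * (Hb * YF) = vstack (Rj * YF) (0\<^sub>m L L)"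
  proof -
    have "Qbar Om j L * (Hb * YF) = Qbar Om j L * Hb * YF"
      by (rule assoc_mult_mat[symmetric, OF Qbjc Hbc YFc])
    also have "\<dots> = vstack Rj (0\<^sub>m L (p+L)) * YF" unfolding Rj(3) stack_zero_vstack using Rj by simp
    also have "\<dots> = vstack (Rj * YF) (0\<^sub>m L L)" using vstack_mult[OF Rj(1) zero_carrier_mat YFc] YFc by simp
    finally show ?thesis .
  qed
  moreover have "Qbar Om j L * (Hb * YF) = vstack (vstack G w) z"
  proof -
    have "Qbar Om j L * (Hb * YF) = T * (P * vstack E0 (h * y))"
      unfolding QbjTP HbYF by (rule assoc_dim) (use Qb1c E0c hc Omc in \<open>simp_all add: T_def P_def\<close>)
    also have "P * vstack E0 (h * y) = vstack (vstack G Ct) (h * y)" unfolding Pv[OF E0c hyc] QE ..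
    also have "\<dots> = vstack G (vstack Ct (h * y))" by (rule vstack_assoc[OF Gc Ctc hyc])
    also have "T * \<dots> = vstack G (vstack w z)" unfolding Tv[OF Gc vc2] Ov ..
    also have "\<dots> = vstack (vstack G w) z" by (rule vstack_assoc[symmetric, OF Gc wc zc])
    finally show ?thesis .
  qed
  ultimately have "vstack (Rj * YF) (0\<^sub>m L L) = vstack (vstack G w) z" by simp
  hence z0: "z = 0\<^sub>m L L"
    using vstack_inj[of "Rj * YF" "p+L" L "0\<^sub>m L L" L "vstack G w" z] Rj YFc Gc wc zc by auto
  have Ov0: "Om j * vstack Ct (h * y) = vstack w (0\<^sub>m L L)" using Ov z0 by simp
  have Pc: "mat_adjoint Q11 \<in> carrier_mat L L" "mat_adjoint Q12 \<in> carrier_mat L L"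
    "mat_adjoint Q21 \<in> carrier_mat L L" "mat_adjoint Q22 \<in> carrier_mat L L" using Qc by auto
  have adjOm: "mat_adjoint (Om j) = four_block_mat (mat_adjoint Q11) (mat_adjoint Q21) (mat_adjoint Q12) (mat_adjoint Q22)"
    unfolding Omb by (rule adj_fb) (use Qc in auto)
  have Oma: "mat_adjoint (Om j) * Om j = 1\<^sub>m (2*L)" using OmU unfolding unitary_def by auto
  have adjOmc: "mat_adjoint (Om j) \<in> carrier_mat (2*L) (2*L)" using Omc by auto
  have "vstack Ct (h * y) = mat_adjoint (Om j) * (Om j * vstack Ct (h * y))"
  proof -
    have "mat_adjoint (Om j) * (Om j * vstack Ct (h * y)) = (mat_adjoint (Om j) * Om j) * vstack Ct (h * y)"
      by (rule assoc_mult_mat[symmetric, OF adjOmc Omc vc2])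
    thus ?thesis using Oma left_mult_one_mat[OF vc2] by simp
  qed
  also have "\<dots> = vstack (mat_adjoint Q11 * w + mat_adjoint Q21 * 0\<^sub>m L L) (mat_adjoint Q12 * w + mat_adjoint Q22 * 0\<^sub>m L L)"
    unfolding Ov0 adjOm by (rule fb_vstack) (use Pc wc in auto)
  also have "\<dots> = vstack (mat_adjoint Q11 * w) (mat_adjoint Q12 * w)" using right_mult_zero_mat[OF Pc(3), of L] right_mult_zero_mat[OF Pc(4), of L]
      right_add_zero_mat[OF mult_carrier_mat[OF Pc(1) wc]] right_add_zero_mat[OF mult_carrier_mat[OF Pc(2) wc]] by simp
  finally have "vstack Ct (h * y) = vstack (mat_adjoint Q11 * w) (mat_adjoint Q12 * w)" .
  hence Ctw: "Ct = mat_adjoint Q11 * w" and hyw: "h * y = mat_adjoint Q12 * w"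
    using vstack_inj[of Ct L L "h * y" L "mat_adjoint Q11 * w" "mat_adjoint Q12 * w"] Ctc hyc Pc wc by auto
  have u: "Q11 * mat_adjoint Q11 + Q12 * mat_adjoint Q12 = 1\<^sub>m L"
  proof -
    have "Om j * mat_adjoint (Om j) = 1\<^sub>m (2*L)" by (rule unitary_right[OF OmU])
    hence "four_block_mat (Q11 * mat_adjoint Q11 + Q12 * mat_adjoint Q12) (Q11 * mat_adjoint Q21 + Q12 * mat_adjoint Q22)
       (Q21 * mat_adjoint Q11 + Q22 * mat_adjoint Q12) (Q21 * mat_adjoint Q21 + Q22 * mat_adjoint Q22) = 1\<^sub>m (2*L)"
      unfolding adjOm unfolding Omb by (subst (asm) mult_four_block_mat) (use Qc Pc in auto)
    hence "lead L L (four_block_mat (Q11 * mat_adjoint Q11 + Q12 * mat_adjoint Q12) (Q11 * mat_adjoint Q21 + Q12 * mat_adjoint Q22)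
       (Q21 * mat_adjoint Q11 + Q22 * mat_adjoint Q12) (Q21 * mat_adjoint Q21 + Q22 * mat_adjoint Q22)) = lead L L (1\<^sub>m (2*L))"
      by simp
    moreover have "lead L L (1\<^sub>m (2*L)) = (1\<^sub>m L :: complex mat)" by (rule eq_matI) (auto simp: lead_def)
    moreover have "Q11 * mat_adjoint Q11 + Q12 * mat_adjoint Q12 \<in> carrier_mat L L" using Qc Pc by auto
    ultimately show ?thesis using lead_fb by metis
  qed
  define SZ where "SZ = stack_zero Y1 L"
  have SZc: "SZ \<in> carrier_mat (p+L) L" unfolding SZ_def using Y1c by simp
  have HbSZ: "Hb * SZ = vstack (Hm * Y1) (0\<^sub>m L L)"
  proof -
    have "Hb * SZ = vstack (lead (p+L) (p+L) Hb * SZ) (h * row_range p L SZ)"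
      unfolding h_def by (rule Hb_mult[OF Hbc SZc hz])
    also have "lead (p+L) (p+L) Hb * SZ = Hm * Y1" unfolding SZ_def Hm_def by (rule lead_sz[OF Y1c])
    also have "h * row_range p L SZ = 0\<^sub>m L L" unfolding SZ_def rr_sz[OF Y1c] using hc by simp
    finally show ?thesis .
  qed
  have E1: "Eblk (j+1) L * S0 = vstack E0 (0\<^sub>m L L)"
  proof -
    have "Eblk (j+1) L = vstack (Eblk j L) (0\<^sub>m L L :: complex mat)" by (rule Eblk_split) (use j in simp)
    moreover have "(Eblk j L :: complex mat) \<in> carrier_mat (p+L) L" unfolding jL[symmetric] by (simp add: Eblk_def)
    ultimately show ?thesis unfolding E0_def using vstack_mult[of "Eblk j L" "p+L" L "0\<^sub>m L L" L S0 L] S0 by simp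
  qed
  have HmY1c: "Hm * Y1 \<in> carrier_mat (p+L) L" using Hmc Y1c by auto
  have Wn: "dim_row W = n" using W by simp
  define Wj where "Wj = lead n (p+L) W"
  define Wp where "Wp = lead n p W"
  have Wjc: "Wj \<in> carrier_mat n (p+L)" and Wpc: "Wp \<in> carrier_mat n p" unfolding Wj_def Wp_def by auto
  have gX1: "gmres_X X0 W Hb S0 (j-1) L = X0 + Wp * Y1" unfolding gmres_X_def Wn pj gY1 Wp_def ..
  have WSZ: "Wj * SZ = Wp * Y1" unfolding Wj_def Wp_def SZ_def by (rule lead_sz[OF Y1c])
  have CtI: "invertible_mat Ct"
  proof -
    have dnz: "det Ct \<noteq> 0"
    proof
      assume "det Ct = 0"
      then obtain v where v: "v \<in> carrier_vec L" "v \<noteq> 0\<^sub>v L" "Ct *\<^sub>v v = 0\<^sub>v L"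
        using det_0_iff_vec_prod_zero_field[OF Ctc] by blast
      define Vm where "Vm = mat L 1 (\<lambda>(a,_). v $ a)"
      have Vmc: "Vm \<in> carrier_mat L 1" unfolding Vm_def by simp
      have CVm: "Ct * Vm = 0\<^sub>m L 1"
      proof -
        have "col (Ct * Vm) 0 = 0\<^sub>v L" using vec_col[OF Ctc v(1)] v(3) unfolding Vm_def by simp
        note colz = this
        show ?thesis
        proof (rule eq_matI)
          fix i k assume ik: "i < dim_row (0\<^sub>m L 1 :: complex mat)" "k < dim_col (0\<^sub>m L 1 :: complex mat)"
          hence i: "i < L" and k: "k = 0" by auto
          have "(Ct * Vm) $$ (i,0) = col (Ct * Vm) 0 $ i" using Ctc Vmc i by simp
          also have "\<dots> = 0" using colz i by simp
          finally show "(Ct * Vm) $$ (i,k) = 0\<^sub>m L 1 $$ (i,k)" using i k by simp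
        qed (use Ctc Vmc in auto)
      qed
      define K where "K = Hm * Y1 - E0"
      have Kc: "K \<in> carrier_mat (p+L) L" unfolding K_def using HmY1c E0c by auto
      have adjQb1c: "mat_adjoint Qb1 \<in> carrier_mat (p+L) (p+L)" using Qb1c by auto
      have KV: "K * Vm = 0\<^sub>m (p+L) 1"
      proof -
        have "K = mat_adjoint Qb1 * (Qb1 * K)"
        proof -
          have "mat_adjoint Qb1 * (Qb1 * K) = (mat_adjoint Qb1 * Qb1) * K"
            by (rule assoc_mult_mat[symmetric, OF adjQb1c Qb1c Kc])
          thus ?thesis using Qb1a Kc by simp
        qed
        also have "Qb1 * K = vstack (0\<^sub>m p L) (- Ct)" unfolding K_def by (rule Res1)
        finally have "K * Vm = mat_adjoint Qb1 * vstack (0\<^sub>m p L) (- Ct) * Vm" by simp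
        also have "\<dots> = mat_adjoint Qb1 * (vstack (0\<^sub>m p L) (- Ct) * Vm)"
          by (rule assoc_mult_mat[OF adjQb1c _ Vmc]) (use Ctc in auto)
        also have "vstack (0\<^sub>m p L) (- Ct) * Vm = vstack (0\<^sub>m p L * Vm) (- Ct * Vm)"
          by (rule vstack_mult) (use Ctc Vmc in auto)
        also have "- Ct * Vm = 0\<^sub>m L 1"
        proof -
          have "- Ct * Vm = - (Ct * Vm)" by (rule uminus_mult_left_mat) (use Ctc Vmc in auto)
          thus ?thesis unfolding CVm by (auto intro!: eq_matI)
        qed
        also have "0\<^sub>m p L * Vm = 0\<^sub>m p 1" using Vmc by simp
        also have "vstack (0\<^sub>m p 1) (0\<^sub>m L 1) = 0\<^sub>m (p+L) 1" by (rule vstack_zero[symmetric])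
        finally show ?thesis using right_mult_zero_mat[OF adjQb1c, of 1] by simp
      qed
      define F where "F = B - A * gmres_X X0 W Hb S0 (j-1) L"
      have Wc2: "W \<in> carrier_mat n (p+L+L)" using W unfolding j1L .
      have "A * (X0 + Wp * Y1) \<in> carrier_mat n L" using A X0 Wpc Y1c by auto
      hence Fc: "F \<in> carrier_mat n L" unfolding F_def gX1 by (rule minus_carrier_mat)
      have AWj: "A * Wj = W * Hb" using assms(16) unfolding Wj_def jL .
      have WSZ': "Wp * Y1 = Wj * SZ" using WSZ by simp
      have F1: "A * (X0 + Wp * Y1) = A * X0 + W * (Hb * SZ)"
      proof -
        have "A * (X0 + Wp * Y1) = A * X0 + A * (Wp * Y1)"
          by (rule mult_add_distrib_mat[OF A X0]) (use Wpc Y1c in auto)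
        also have "A * (Wp * Y1) = (A * Wj) * SZ" unfolding WSZ'
          by (rule assoc_mult_mat[symmetric, OF A Wjc SZc])
        also have "\<dots> = W * (Hb * SZ)" unfolding AWj by (rule assoc_mult_mat[OF Wc2 Hbc SZc])
        finally show ?thesis .
      qed
      have F2: "B - A * X0 = W * vstack E0 (0\<^sub>m L L)"
      proof -
        have "lead n L W = W * Eblk (j+1) L" by (rule lead_E[OF W]) (use j in simp)
        hence "B - A * X0 = W * Eblk (j+1) L * S0" using assms(11,14) by simp
        also have "\<dots> = W * (Eblk (j+1) L * S0)" by (rule assoc_mult_mat[OF W _ S0]) (simp add: Eblk_def)
        finally show ?thesis unfolding E1 .
      qed
      have "F = W * vstack E0 (0\<^sub>m L L) - W * (Hb * SZ)"
      proof -
        have "F = B - (A * X0 + W * (Hb * SZ))" unfolding F_def gX1 F1 ..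
        also have "\<dots> = (B - A * X0) - W * (Hb * SZ)"
        proof -
          have cc: "A * X0 \<in> carrier_mat n L" "W * (Hb * SZ) \<in> carrier_mat n L" using A X0 Wc2 Hbc SZc by auto
          define a1 where "a1 = A * X0"
          define b1 where "b1 = W * (Hb * SZ)"
          have "B - (a1 + b1) = (B - a1) - b1" by (rule eq_matI) (use B cc[folded a1_def b1_def] in auto)
          thus ?thesis unfolding a1_def b1_def .
        qed
        finally show ?thesis unfolding F2 .
      qed
      also have "\<dots> = W * (vstack E0 (0\<^sub>m L L) - Hb * SZ)"
        by (rule mult_minus_distrib_mat[symmetric, OF Wc2]) (use E0c Hbc SZc in auto)
      also have "vstack E0 (0\<^sub>m L L) - Hb * SZ = vstack (E0 - Hm * Y1) (0\<^sub>m L L - 0\<^sub>m L L)"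
        unfolding HbSZ by (rule vstack_minus) (use E0c HmY1c in auto)
      also have "E0 - Hm * Y1 = - K"
      proof -
        have sw: "X - Y = - (Y - X)" if "X \<in> carrier_mat r c" "Y \<in> carrier_mat r c" for X Y :: "complex mat" and r c
          by (rule eq_matI) (use that in auto)
        show ?thesis unfolding K_def by (rule sw[OF E0c HmY1c])
      qed
      finally have FF: "F = W * vstack (- K) (0\<^sub>m L L - 0\<^sub>m L L)" .
      have "F * Vm = W * (vstack (- K) (0\<^sub>m L L - 0\<^sub>m L L) * Vm)"
        unfolding FF by (rule assoc_mult_mat[OF Wc2 _ Vmc]) (use Kc in auto)
      also have "vstack (- K) (0\<^sub>m L L - 0\<^sub>m L L) * Vm = vstack (- K * Vm) ((0\<^sub>m L L - 0\<^sub>m L L) * Vm)"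
        by (rule vstack_mult) (use Kc Vmc in auto)
      also have "- K * Vm = 0\<^sub>m (p+L) 1"
      proof -
        have "- K * Vm = - (K * Vm)" by (rule uminus_mult_left_mat) (use Kc Vmc in auto)
        thus ?thesis unfolding KV by (auto intro!: eq_matI)
      qed
      also have "(0\<^sub>m L L - 0\<^sub>m L L) * Vm = 0\<^sub>m L 1"
      proof -
        have zz: "0\<^sub>m L L - 0\<^sub>m L L = (0\<^sub>m L L :: complex mat)" by (auto intro!: eq_matI)
        show ?thesis unfolding zz by (rule left_mult_zero_mat[OF Vmc])
      qed
      also have "vstack (0\<^sub>m (p+L) 1) (0\<^sub>m L 1) = 0\<^sub>m (p+L+L) 1" by (rule vstack_zero[symmetric])
      finally have FVm: "F * Vm = 0\<^sub>m n 1" using Wc2 by simp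
      have "F *\<^sub>v v = 0\<^sub>v n" using vec_col[OF Fc v(1)] FVm unfolding Vm_def by (auto intro!: eq_vecI)
      hence "v = 0\<^sub>v L" using rank_kernel[OF Fc _ v(1)] assms(23) unfolding F_def by auto
      thus False using v(2) by simp
    qed
    from det_non_zero_imp_unit[OF Ctc dnz, unfolded Units_def, of "()"]
    obtain B' where "B' \<in> carrier_mat L L" "B' * Ct = 1\<^sub>m L" "Ct * B' = 1\<^sub>m L"
      by (auto simp: ring_mat_def)
    thus ?thesis using Ctc unfolding invertible_mat_def inverts_mat_def square_mat.simps by auto
  qed
  define Ci where "Ci = minv Ct"
  have Ci: "Ci \<in> carrier_mat L L" "Ct * Ci = 1\<^sub>m L" "Ci * Ct = 1\<^sub>m L"
    using minv_props[OF CtI Ctc] unfolding Ci_def by auto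
  define Dc where "Dc = diag_real L c"
  define Ds where "Ds = diag_real L s"
  have Dcc: "Dc \<in> carrier_mat L L" and Dsc: "Ds \<in> carrier_mat L L" unfolding Dc_def Ds_def by auto
  define M1 where "M1 = minv Ct * V * (diag_real L c * diag_real L c) * mat_adjoint V * Ct"
  define M2 where "M2 = minv Ct * V * (diag_real L s * diag_real L s) * mat_adjoint V * Ct"
  have Vc: "V \<in> carrier_mat L L" and Va: "mat_adjoint V * V = 1\<^sub>m L" using assms(26) unfolding unitary_def by auto
  have Vr: "V * mat_adjoint V = 1\<^sub>m L" by (rule unitary_right[OF assms(26)])
  have U1c: "U1 \<in> carrier_mat L L" and U1a: "mat_adjoint U1 * U1 = 1\<^sub>m L" using assms(24) unfolding unitary_def by auto
  have adjVc: "mat_adjoint V \<in> carrier_mat L L" and adjU1c: "mat_adjoint U1 \<in> carrier_mat L L" using Vc U1c by auto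
  have Q11e: "Q11 = U1 * Dc * mat_adjoint V" unfolding Q11_def Dc_def by (rule assms(28))
  have adjQ11: "mat_adjoint Q11 = V * (Dc * mat_adjoint U1)"
    unfolding Q11e using U1c Dcc adjVc by (simp add: adj_mult[of _ L L _ L] Dc_def)
  have e1: "mat_adjoint U1 * (U1 * (Dc * (mat_adjoint V * Ct))) = Dc * (mat_adjoint V * Ct)"
  proof -
    have "mat_adjoint U1 * (U1 * (Dc * (mat_adjoint V * Ct))) = (mat_adjoint U1 * U1) * (Dc * (mat_adjoint V * Ct))"
      by (rule assoc_mult_mat[symmetric, OF adjU1c U1c]) (use Dcc adjVc Ctc in auto)
    thus ?thesis using U1a Dcc adjVc Ctc by simp
  qed
  have "mat_adjoint Q11 * (Q11 * Ct) = V * (Dc * mat_adjoint U1) * (Q11 * Ct)" by (simp only: adjQ11)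
  also have "\<dots> = V * (Dc * (Dc * (mat_adjoint V * Ct)))"
    unfolding Q11e using U1c Dcc adjVc adjU1c Vc Ctc e1 by (simp add: assoc_dim)
  finally have aq: "mat_adjoint Q11 * (Q11 * Ct) = V * (Dc * (Dc * (mat_adjoint V * Ct)))" .
  have M1alt: "M1 = Ci * mat_adjoint Q11 * Q11 * Ct"
    unfolding M1_def Ci_def[symmetric] Dc_def[symmetric] using aq Ci Vc Dcc adjVc Ctc Qc by (simp add: assoc_dim)
  have DD: "Dc * Dc + Ds * Ds = 1\<^sub>m L"
    unfolding Dc_def Ds_def diag_mult by (rule diag_add_one) (use assms(27) in \<open>auto simp: power2_eq_square\<close>)
  have M12: "M1 + M2 = 1\<^sub>m L"
  proof -
    have "M1 + M2 = (Ci * V) * ((Dc * Dc + Ds * Ds) * (mat_adjoint V * Ct))"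
      unfolding M1_def M2_def Ci_def[symmetric] Dc_def[symmetric] Ds_def[symmetric]
      using Ci Vc Dcc Dsc adjVc Ctc by (simp add: assoc_dim add_mult_dim mult_add_dim)
    also have "\<dots> = Ci * ((V * mat_adjoint V) * Ct)" unfolding DD using Ci Vc adjVc Ctc by (simp add: assoc_dim)
    also have "\<dots> = 1\<^sub>m L" unfolding Vr using Ci Ctc by simp
    finally show ?thesis .
  qed
  have M1c: "M1 \<in> carrier_mat L L" unfolding M1alt using Ci Qc Ctc by auto
  have M2c: "M2 \<in> carrier_mat L L" unfolding M2_def using Ci_def Ci Vc Dsc adjVc Ctc Ds_def by auto
  have M2alt: "M2 = 1\<^sub>m L - M1"
  proof (rule eq_matI)
    fix a b assume ab: "a < dim_row (1\<^sub>m L - M1)" "b < dim_col (1\<^sub>m L - M1)"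
    have "(M1 + M2) $$ (a,b) = 1\<^sub>m L $$ (a,b)" by (simp only: M12)
    hence "M1 $$ (a,b) + M2 $$ (a,b) = 1\<^sub>m L $$ (a,b)" using ab M1c M2c by simp
    thus "M2 $$ (a,b) = (1\<^sub>m L - M1) $$ (a,b)" using ab M1c M2c
      by (simp del: index_one_mat(1)) (metis add_diff_cancel_left')
  qed (use M1c M2c in auto)
  have Z: "Q11 * (- Ct * M2) + Q12 * (h * y * M1) = 0\<^sub>m L L"
    by (rule key_alg[OF Qc(1,2) Pc(1,2) Ctc Ci(1) wc Ci(2,3) Ctw hyw u M1alt M2alt])
  define Ys where "Ys = YF * M1 + SZ * M2"
  have Ysc: "Ys \<in> carrier_mat (p+L) L" unfolding Ys_def using YFc M1c SZc M2c by auto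
  have HbYs: "Hb * Ys = vstack (E0 * M1 + Hm * Y1 * M2) (h * y * M1 + 0\<^sub>m L L * M2)"
  proof -
    have "Hb * Ys = Hb * YF * M1 + Hb * SZ * M2" unfolding Ys_def
      using Hbc YFc M1c SZc M2c by (simp add: mult_add_dim assoc_dim)
    also have "\<dots> = vstack E0 (h * y) * M1 + vstack (Hm * Y1) (0\<^sub>m L L) * M2" unfolding HbYF HbSZ ..
    also have "\<dots> = vstack (E0 * M1) (h * y * M1) + vstack (Hm * Y1 * M2) (0\<^sub>m L L * M2)"
      using vstack_mult[OF E0c hyc M1c] vstack_mult[OF HmY1c zero_carrier_mat M2c] by simp
    also have "\<dots> = vstack (E0 * M1 + Hm * Y1 * M2) (h * y * M1 + 0\<^sub>m L L * M2)"
      by (rule vstack_add) (use E0c hyc M1c HmY1c M2c in auto)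
    finally show ?thesis .
  qed
  have E0M1: "E0 * M1 = E0 - E0 * M2"
  proof -
    have "E0 * M2 = E0 - E0 * M1" unfolding M2alt using E0c M1c by (simp add: mult_minus_dim)
    moreover have "E0 * M1 \<in> carrier_mat (p+L) L" using E0c M1c by auto
    ultimately show ?thesis using E0c by (intro eq_matI) auto
  qed
  have D: "Hb * Ys - vstack E0 (0\<^sub>m L L) = vstack ((Hm * Y1 - E0) * M2) (h * y * M1)"
  proof -
    have "Hb * Ys - vstack E0 (0\<^sub>m L L) = vstack (E0 * M1 + Hm * Y1 * M2 - E0) (h * y * M1 + 0\<^sub>m L L * M2 - 0\<^sub>m L L)"
      unfolding HbYs by (rule vstack_minus) (use E0c hyc M1c HmY1c M2c in auto)
    also have "E0 * M1 + Hm * Y1 * M2 - E0 = (Hm * Y1 - E0) * M2"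
    proof -
      have r: "(Hm * Y1 - E0) * M2 = Hm * Y1 * M2 - E0 * M2" by (rule minus_mult_distrib_mat[OF HmY1c E0c M2c])
      have ac: "E0 * M2 \<in> carrier_mat (p+L) L" "Hm * Y1 * M2 \<in> carrier_mat (p+L) L" using E0c HmY1c M2c by auto
      define a where "a = E0 * M2"
      define b where "b = Hm * Y1 * M2"
      have "E0 - a + b - E0 = b - a"
        by (rule eq_matI) (use E0c ac[folded a_def b_def] in auto)
      thus ?thesis unfolding E0M1 r a_def b_def .
    qed
    also have "h * y * M1 + 0\<^sub>m L L * M2 - 0\<^sub>m L L = h * y * M1"
      using hyc M1c M2c by (intro eq_matI) auto
    finally show ?thesis .
  qed
  define z2 where "z2 = Q21 * (- Ct * M2) + Q22 * (h * y * M1)"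
  have CM2c: "- Ct * M2 \<in> carrier_mat L L" and hyM1c: "h * y * M1 \<in> carrier_mat L L"
    using Ctc M2c hyc M1c by auto
  have z2c: "z2 \<in> carrier_mat L L" unfolding z2_def using Qc CM2c hyM1c by auto
  have QD: "Qbar Om j L * vstack ((Hm * Y1 - E0) * M2) (h * y * M1) = vstack (0\<^sub>m (p+L) L) z2"
  proof -
    have c1: "(Hm * Y1 - E0) * M2 \<in> carrier_mat (p+L) L" using HmY1c E0c M2c by auto
    have "Qbar Om j L * vstack ((Hm * Y1 - E0) * M2) (h * y * M1) = T * (P * vstack ((Hm * Y1 - E0) * M2) (h * y * M1))"
      unfolding QbjTP by (rule assoc_dim) (use Qb1c hc Omc c1 E0c in \<open>simp_all add: T_def P_def\<close>)
    also have "P * vstack ((Hm * Y1 - E0) * M2) (h * y * M1) = vstack (Qb1 * ((Hm * Y1 - E0) * M2)) (h * y * M1)"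
      by (rule Pv[OF c1 hyM1c])
    also have "Qb1 * ((Hm * Y1 - E0) * M2) = vstack (0\<^sub>m p L) (- Ct * M2)"
    proof -
      have "Qb1 * ((Hm * Y1 - E0) * M2) = Qb1 * (Hm * Y1 - E0) * M2"
        by (rule assoc_mult_mat[symmetric, OF Qb1c _ M2c]) (use HmY1c E0c in auto)
      also have "\<dots> = vstack (0\<^sub>m p L * M2) (- Ct * M2)" unfolding Res1
        by (rule vstack_mult) (use Ctc M2c in auto)
      finally show ?thesis using M2c by simp
    qed
    also have "vstack (vstack (0\<^sub>m p L) (- Ct * M2)) (h * y * M1) = vstack (0\<^sub>m p L) (vstack (- Ct * M2) (h * y * M1))"
      by (rule vstack_assoc) (use CM2c hyM1c in auto)
    also have "T * \<dots> = vstack (0\<^sub>m p L) (Om j * vstack (- Ct * M2) (h * y * M1))"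
      by (rule Tv) (use CM2c hyM1c in \<open>auto simp: L2\<close>)
    also have "Om j * vstack (- Ct * M2) (h * y * M1) = vstack (0\<^sub>m L L) z2"
      unfolding Omv[OF CM2c hyM1c] Z z2_def ..
    also have "vstack (0\<^sub>m p L) (vstack (0\<^sub>m L L) z2) = vstack (0\<^sub>m (p+L) L) z2"
      by (subst vstack_assoc[symmetric]) (use z2c in \<open>auto simp: vstack_zero[symmetric]\<close>)
    finally show ?thesis .
  qed
  have gYj: "gmres_Y Hb S0 j L = Ys"
  proof (rule gmres_char[of "Qbar Om j L" j L Rj])
    show "Qbar Om j L \<in> carrier_mat ((j+1)*L) ((j+1)*L)" unfolding j1L by (rule Qbjc)
    show "mat_adjoint (Qbar Om j L) * Qbar Om j L = 1\<^sub>m ((j+1)*L)" unfolding j1L by (rule Qbja)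
    show "Rj \<in> carrier_mat (j*L) (j*L)" unfolding jL by (rule Rj(1))
    show "invertible_mat Rj" by (rule Rj(2))
    show "Qbar Om j L * lead ((j+1)*L) (j*L) Hb = stack_zero Rj L" unfolding j1L jL lead_full[OF Hbc] by (rule Rj(3))
    show "Ys \<in> carrier_mat (j*L) L" unfolding jL by (rule Ysc)
    show "S0 \<in> carrier_mat L L" by (rule S0)
    show "row_range 0 (j*L) (Qbar Om j L * (lead ((j+1)*L) (j*L) Hb * Ys - Eblk (j+1) L * S0)) = 0\<^sub>m (j*L) L"
      unfolding j1L jL lead_full[OF Hbc] E1 D QD by (rule row_range_vstack1) (use z2c in auto)
  qed
  have gXj: "gmres_X X0 W Hb S0 j L = X0 + Wj * Ys" unfolding gmres_X_def Wn jL gYj Wj_def ..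
  have fX: "fom_X X0 W Hb S0 j L = X0 + Wj * YF" unfolding fom_X_def Wn jL Wj_def YF_def Hj_def E0_def ..
  have Xid: "X0 + Wj * Ys = (X0 + Wj * YF) * M1 + (X0 + Wp * Y1) * M2"
  proof -
    have c: "Wj * YF * M1 \<in> carrier_mat n L" "Wp * Y1 * M2 \<in> carrier_mat n L"
      "X0 * M1 \<in> carrier_mat n L" "X0 * M2 \<in> carrier_mat n L"
      using Wjc YFc M1c Wpc Y1c M2c X0 by auto
    have l: "Wj * Ys = Wj * YF * M1 + Wp * Y1 * M2"
    proof -
      have "Wj * Ys = Wj * (YF * M1) + Wj * (SZ * M2)" unfolding Ys_def
        by (rule mult_add_distrib_mat[OF Wjc]) (use YFc M1c SZc M2c in auto)
      also have "Wj * (YF * M1) = Wj * YF * M1" by (rule assoc_mult_mat[symmetric, OF Wjc YFc M1c])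
      also have "Wj * (SZ * M2) = Wj * SZ * M2" by (rule assoc_mult_mat[symmetric, OF Wjc SZc M2c])
      finally show ?thesis unfolding WSZ .
    qed
    have r1: "(X0 + Wj * YF) * M1 = X0 * M1 + Wj * YF * M1"
      by (rule add_mult_distrib_mat[OF X0 _ M1c]) (use Wjc YFc in auto)
    have r2: "(X0 + Wp * Y1) * M2 = X0 * M2 + Wp * Y1 * M2"
      by (rule add_mult_distrib_mat[OF X0 _ M2c]) (use Wpc Y1c in auto)
    have x: "X0 * M1 + X0 * M2 = X0"
    proof -
      have "X0 * (M1 + M2) = X0 * M1 + X0 * M2" by (rule mult_add_distrib_mat[OF X0 M1c M2c])
      thus ?thesis unfolding M12 using X0 by simp
    qed
    define a1 where "a1 = X0 * M1"
    define a2 where "a2 = X0 * M2"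
    define b1 where "b1 = Wj * YF * M1"
    define b2 where "b2 = Wp * Y1 * M2"
    have "X0 + (b1 + b2) = (a1 + b1) + (a2 + b2)"
      unfolding x[symmetric, folded a1_def a2_def]
      by (rule eq_matI) (use c[folded a1_def a2_def b1_def b2_def] in auto)
    thus ?thesis unfolding l r1 r2 a1_def a2_def b1_def b2_def .
  qed
  show ?thesis
    unfolding Let_def Ct_def[symmetric] M1_def[symmetric] M2_def[symmetric]
  proof (intro conjI)
    show "invertible_mat Ct" by (rule CtI)
    show "gmres_X X0 W Hb S0 j L = fom_X X0 W Hb S0 j L * M1 + gmres_X X0 W Hb S0 (j - 1) L * M2"
      unfolding gXj fX gX1 by (rule Xid)
    show "M1 + M2 = 1\<^sub>m L" by (rule M12)
    show "M1 = minv Ct * mat_adjoint (blk (Om j) 1 1 L) * blk (Om j) 1 1 L * Ct"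
      using M1alt unfolding Ci_def Q11_def .
  qed
qed

end
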